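(* Let $(x,y,p)$ be an optimal solution of the RMP with optimal value $z^{\mathit{RMP}}$ and let $(\alpha,\beta,\gamma,\delta,\mu,\phi,\psi)$ be an optimal solution of the DRMP, with characteristic lifting $(\alpha,\check\beta,\gamma,\check\delta,\mu,\phi,\psi)$. Define $$\bar c^*_b:=-\Bigl(\min_{l\in L(b),\,m\in\mathcal M}\bar c_{b,l,m}\Bigr)^-\le 0\quad(b\in\mathcal B),$$ $$\bar d^*:=-\Bigl(\min_{l\in\mathcal L\setminus\bigcap_{b\in\mathcal B}L(b)}\Bigl(-\sum_{b\in\mathcal B}\check\beta_{b,l}+\check\delta_l+\gamma-\chi_l\mu\Bigr)\Bigr)^-\le 0$$ (with $\bar d^*:=0$ if the index set is empty, and with the convention that a minimum over an empty set is $+\infty$), and the lower-bound shift $\tilde\alpha_b:=\alpha_b+\bar c^*_b$, $\tilde\beta:=\check\beta$, $\tilde\gamma:=\gamma-\bar d^*$, $\tilde\delta:=\check\delta$, $\tilde\mu:=\mu$, $\tilde\phi:=\phi$, $\tilde\psi:=\psi$. Then $(\tilde\alpha,\tilde\beta,\tilde\gamma,\tilde\delta,\tilde\mu,\tilde\phi,\tilde\psi)$ is feasible for the DMP, and its DMP objective value equals $z^{\mathit{RMP}}+\sum_{b\in\mathcal B}\bar c^*_b+k\bar d^*$. Consequently the optimal value $z^{\mathit{MP}}$ of the MP satisfies $$z^{\mathit{MP}}\ \ge\ z^{\mathit{RMP}}+\sum_{b\in\mathcal B}\bar c^*_b+k\,\bar d^*.$$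
   Context: Let $\mathcal B$ (branches) and $\mathcal S$ (sizes) be finite nonempty sets, $\mathcal M\subset\mathbb N$ a finite nonempty set of multiplicities, and $\mathcal L\subset\mathbb N^{\mathcal S}$ a finite nonempty set of lot-types; for $l\in\mathcal L$ write $|l|:=\sum_{s\in\mathcal S}l_s$. Let costs $c_{b,l,m}\ge 0$ ($b\in\mathcal B,l\in\mathcal L,m\in\mathcal M$), an integer $k\ge 0$, reals $\underline I\le\overline I$ and a constant $P>0$ be given. Let $\mathcal L''\subseteq\mathcal L'\subseteq\mathcal L$, for each $b\in\mathcal B$ let $L(b)\subseteq\mathcal L'$, and for each $b$ and $l\in L(b)$ let $M(b,l)\subseteq\mathcal M$ be nonempty. Put $\chi_l:=1$ if $l\notin\mathcal L''$ and $\chi_l:=0$ if $l\in\mathcal L''$. For real $t$, $(t)^+:=\max\{t,0\}$ and $(t)^-:=\max\{-t,0\}$. Master problem (MP): the linear program in variables $x_{b,l,m}\ge0$ ($b\in\mathcal B,l\in\mathcal L,m\in\mathcal M$), $y_l\ge0$ ($l\in\mathcal L$), $p\ge 0$: minimize $\sum_{b,l,m}c_{b,l,m}x_{b,l,m}+Pp$ subject to ($\alpha_b$) $\sum_{l,m}x_{b,l,m}=1$ for all $b$; ($\beta_{b,l}$) $y_l-\sum_m x_{b,l,m}\ge 0$ for all $b,l$; ($\gamma$) $-\sum_l y_l\ge -k$; ($\delta_l$) $\sum_{b,m}x_{b,l,m}-y_l\ge0$ for all $l$; ($\mu$) $\sum_{l\in\mathcal L\setminus\mathcal L''}y_l+p\ge1$;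 ($\phi$) $\sum_{b,l,m}m|l|x_{b,l,m}\ge\underline I$; ($\psi$) $-\sum_{b,l,m}m|l|x_{b,l,m}\ge-\overline I$. The symbol in parentheses names the dual variable of each constraint. Restricted master problem (RMP): the same LP but containing only the variables $x_{b,l,m}$ with $l\in L(b)$, $m\in M(b,l)$, the variables $y_l$ with $l\in\mathcal L'$, and $p$; only the $\beta_{b,l}$-constraints with $l\in L(b)$ and the $\delta_l$-constraints with $l\in\mathcal L'$ are kept, and all sums are restricted to the present variables. Dual master problem (DMP): variables $\alpha_b\in\mathbb R$, $\beta_{b,l}\ge0$ (all $b\in\mathcal B,l\in\mathcal L$), $\gamma\ge0$, $\delta_l\ge0$ (all $l\in\mathcal L$), $\mu\ge0$, $\phi,\psi\ge0$; maximize $\sum_b\alpha_b-k\gamma+\underline I\phi-\overline I\psi+\mu$ subject to the $x$-constraints $\alpha_b-\beta_{b,l}+\delta_l+m|l|(\phi-\psi)\le c_{b,l,m}$ for all $b,l,m$, the $y$-constraints $\sum_{b\in\mathcal B}\beta_{b,l}-\gamma-\delta_l+\chi_l\mu\le 0$ for all $l\in\mathcal L$, and the $p$-constraint $\mu\le P$. The dual restricted master problem (DRMP) is the LP dual of the RMP: variables $\alpha_b$, $\beta_{b,l}$ ($l\in L(b)$), $\gamma$, $\delta_l$ ($l\in\mathcal L'$), $\mu,\phi,\psi$ with the same sign conditions and objective, $x$-constraints only for $l\in L(b)$, $m\in M(b,l)$, $y$-constraints $\sum_{b:\,l\in L(b)}\beta_{b,l}-\gamma-\delta_l+\chi_l\mu\le0$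 for $l\in\mathcal L'$, and $\mu\le P$. Given a DRMP solution $(\alpha,\beta,\gamma,\delta,\mu,\phi,\psi)$: its canonical lifting sets $\bar\beta_{b,l}:=\beta_{b,l}$ if $l\in L(b)$ and $0$ otherwise, $\bar\delta_l:=\delta_l$ if $l\in\mathcal L'$ and $0$ otherwise. The (uncompensated) reduced cost is $\bar c_{b,l,m}:=c_{b,l,m}-\alpha_b+\bar\beta_{b,l}-\bar\delta_l-m|l|(\phi-\psi)$ for all $b\in\mathcal B,l\in\mathcal L,m\in\mathcal M$. The characteristic lifting is $(\alpha,\check\beta,\gamma,\check\delta,\mu,\phi,\psi)$ with $\check\beta_{b,l}:=\beta_{b,l}$ if $l\in L(b)$ and $\check\beta_{b,l}:=(\min_{m\in\mathcal M}\bar c_{b,l,m})^-$ if $l\in\mathcal L\setminus L(b)$; $\check\delta_l:=\delta_l$ if $l\in\mathcal L'$ and $\check\delta_l:=(\min_{b\in\mathcal B,m\in\mathcal M}\bar c_{b,l,m})^+$ if $l\in\mathcal L\setminus\mathcal L'$. *)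

theory Defs
  imports Complex_Main
begin

text \<open>Lot-types are elements of nat^S, represented as functions 's => nat
  (assumed zero outside S). Notation: B branches, S sizes, Ms multiplicities,
  Ls lot-types, L1 = L', L2 = L'', Lb b = L(b), Mb b l = M(b,l).\<close>

definition lsize :: "'s set \<Rightarrow> ('s \<Rightarrow> nat) \<Rightarrow> real" where
  "lsize S l = real (\<Sum>s\<in>S. l s)"

definition chi :: "('s \<Rightarrow> nat) set \<Rightarrow> ('s \<Rightarrow> nat) \<Rightarrow> real" where
  "chi L2 l = (if l \<in> L2 then 0 else 1)"

definition pos_part :: "real \<Rightarrow> real" where "pos_part t = max t 0"
definition neg_part :: "real \<Rightarrow> real" where "neg_part t = max (- t) 0"

definition mp_feasible ::
  "'b set \<Rightarrow> 's set \<Rightarrow> nat set \<Rightarrow> ('s \<Rightarrow> nat) set \<Rightarrow> ('s \<Rightarrow> nat) set \<Rightarrow> nat \<Rightarrow> real \<Rightarrow> real \<Rightarrow>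
   ('b \<Rightarrow> ('s \<Rightarrow> nat) \<Rightarrow> nat \<Rightarrow> real) \<Rightarrow> (('s \<Rightarrow> nat) \<Rightarrow> real) \<Rightarrow> real \<Rightarrow> bool" where
  "mp_feasible B S Ms Ls L2 k Ilo Ihi x y p \<longleftrightarrow>
     (\<forall>b\<in>B. \<forall>l\<in>Ls. \<forall>m\<in>Ms. x b l m \<ge> 0) \<and> (\<forall>l\<in>Ls. y l \<ge> 0) \<and> p \<ge> 0 \<and>
     (\<forall>b\<in>B. (\<Sum>l\<in>Ls. \<Sum>m\<in>Ms. x b l m) = 1) \<and>
     (\<forall>b\<in>B. \<forall>l\<in>Ls. y l - (\<Sum>m\<in>Ms. x b l m) \<ge> 0) \<and>
     - (\<Sum>l\<in>Ls. y l) \<ge> - real k \<and>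
     (\<forall>l\<in>Ls. (\<Sum>b\<in>B. \<Sum>m\<in>Ms. x b l m) - y l \<ge> 0) \<and>
     (\<Sum>l\<in>Ls - L2. y l) + p \<ge> 1 \<and>
     (\<Sum>b\<in>B. \<Sum>l\<in>Ls. \<Sum>m\<in>Ms. real m * lsize S l * x b l m) \<ge> Ilo \<and>
     - (\<Sum>b\<in>B. \<Sum>l\<in>Ls. \<Sum>m\<in>Ms. real m * lsize S l * x b l m) \<ge> - Ihi"

definition mp_obj ::
  "'b set \<Rightarrow> nat set \<Rightarrow> ('s \<Rightarrow> nat) set \<Rightarrow> ('b \<Rightarrow> ('s \<Rightarrow> nat) \<Rightarrow> nat \<Rightarrow> real) \<Rightarrow> real \<Rightarrow>
   ('b \<Rightarrow> ('s \<Rightarrow> nat) \<Rightarrow> nat \<Rightarrow> real) \<Rightarrow> (('s \<Rightarrow> nat) \<Rightarrow> real) \<Rightarrow> real \<Rightarrow> real" where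
  "mp_obj B Ms Ls c P x y p = (\<Sum>b\<in>B. \<Sum>l\<in>Ls. \<Sum>m\<in>Ms. c b l m * x b l m) + P * p"

definition mp_value ::
  "'b set \<Rightarrow> 's set \<Rightarrow> nat set \<Rightarrow> ('s \<Rightarrow> nat) set \<Rightarrow> ('s \<Rightarrow> nat) set \<Rightarrow>
   ('b \<Rightarrow> ('s \<Rightarrow> nat) \<Rightarrow> nat \<Rightarrow> real) \<Rightarrow> nat \<Rightarrow> real \<Rightarrow> real \<Rightarrow> real \<Rightarrow> real" where
  "mp_value B S Ms Ls L2 c k Ilo Ihi P =
     Inf {mp_obj B Ms Ls c P x y p | x y p. mp_feasible B S Ms Ls L2 k Ilo Ihi x y p}"

definition rmp_feasible ::
  "'b set \<Rightarrow> 's set \<Rightarrow> ('s \<Rightarrow> nat) set \<Rightarrow> ('s \<Rightarrow> nat) set \<Rightarrow> ('b \<Rightarrow> ('s \<Rightarrow> nat) set) \<Rightarrow>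
   ('b \<Rightarrow> ('s \<Rightarrow> nat) \<Rightarrow> nat set) \<Rightarrow> nat \<Rightarrow> real \<Rightarrow> real \<Rightarrow>
   ('b \<Rightarrow> ('s \<Rightarrow> nat) \<Rightarrow> nat \<Rightarrow> real) \<Rightarrow> (('s \<Rightarrow> nat) \<Rightarrow> real) \<Rightarrow> real \<Rightarrow> bool" where
  "rmp_feasible B S L1 L2 Lb Mb k Ilo Ihi x y p \<longleftrightarrow>
     (\<forall>b\<in>B. \<forall>l\<in>Lb b. \<forall>m\<in>Mb b l. x b l m \<ge> 0) \<and> (\<forall>l\<in>L1. y l \<ge> 0) \<and> p \<ge> 0 \<and>
     (\<forall>b\<in>B. (\<Sum>l\<in>Lb b. \<Sum>m\<in>Mb b l. x b l m) = 1) \<and>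
     (\<forall>b\<in>B. \<forall>l\<in>Lb b. y l - (\<Sum>m\<in>Mb b l. x b l m) \<ge> 0) \<and>
     - (\<Sum>l\<in>L1. y l) \<ge> - real k \<and>
     (\<forall>l\<in>L1. (\<Sum>b\<in>{b\<in>B. l \<in> Lb b}. \<Sum>m\<in>Mb b l. x b l m) - y l \<ge> 0) \<and>
     (\<Sum>l\<in>L1 - L2. y l) + p \<ge> 1 \<and>
     (\<Sum>b\<in>B. \<Sum>l\<in>Lb b. \<Sum>m\<in>Mb b l. real m * lsize S l * x b l m) \<ge> Ilo \<and>
     - (\<Sum>b\<in>B. \<Sum>l\<in>Lb b. \<Sum>m\<in>Mb b l. real m * lsize S l * x b l m) \<ge> - Ihi"

definition rmp_obj ::
  "'b set \<Rightarrow> ('b \<Rightarrow> ('s \<Rightarrow> nat) set) \<Rightarrow> ('b \<Rightarrow> ('s \<Rightarrow> nat) \<Rightarrow> nat set) \<Rightarrow>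
   ('b \<Rightarrow> ('s \<Rightarrow> nat) \<Rightarrow> nat \<Rightarrow> real) \<Rightarrow> real \<Rightarrow>
   ('b \<Rightarrow> ('s \<Rightarrow> nat) \<Rightarrow> nat \<Rightarrow> real) \<Rightarrow> (('s \<Rightarrow> nat) \<Rightarrow> real) \<Rightarrow> real \<Rightarrow> real" where
  "rmp_obj B Lb Mb c P x y p = (\<Sum>b\<in>B. \<Sum>l\<in>Lb b. \<Sum>m\<in>Mb b l. c b l m * x b l m) + P * p"

definition rmp_optimal where
  "rmp_optimal B S L1 L2 Lb Mb c k Ilo Ihi P x y p \<longleftrightarrow>
     rmp_feasible B S L1 L2 Lb Mb k Ilo Ihi x y p \<and>
     (\<forall>x' y' p'. rmp_feasible B S L1 L2 Lb Mb k Ilo Ihi x' y' p' \<longrightarrow>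
        rmp_obj B Lb Mb c P x y p \<le> rmp_obj B Lb Mb c P x' y' p')"

definition dmp_obj ::
  "'b set \<Rightarrow> nat \<Rightarrow> real \<Rightarrow> real \<Rightarrow> ('b \<Rightarrow> real) \<Rightarrow> real \<Rightarrow> real \<Rightarrow> real \<Rightarrow> real \<Rightarrow> real" where
  "dmp_obj B k Ilo Ihi al ga mu ph ps =
     (\<Sum>b\<in>B. al b) - real k * ga + Ilo * ph - Ihi * ps + mu"

definition dmp_feasible ::
  "'b set \<Rightarrow> 's set \<Rightarrow> nat set \<Rightarrow> ('s \<Rightarrow> nat) set \<Rightarrow> ('s \<Rightarrow> nat) set \<Rightarrow>
   ('b \<Rightarrow> ('s \<Rightarrow> nat) \<Rightarrow> nat \<Rightarrow> real) \<Rightarrow> real \<Rightarrow>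
   ('b \<Rightarrow> real) \<Rightarrow> ('b \<Rightarrow> ('s \<Rightarrow> nat) \<Rightarrow> real) \<Rightarrow> real \<Rightarrow> (('s \<Rightarrow> nat) \<Rightarrow> real) \<Rightarrow>
   real \<Rightarrow> real \<Rightarrow> real \<Rightarrow> bool" where
  "dmp_feasible B S Ms Ls L2 c P al be ga de mu ph ps \<longleftrightarrow>
     (\<forall>b\<in>B. \<forall>l\<in>Ls. be b l \<ge> 0) \<and> ga \<ge> 0 \<and> (\<forall>l\<in>Ls. de l \<ge> 0) \<and>
     mu \<ge> 0 \<and> ph \<ge> 0 \<and> ps \<ge> 0 \<and>
     (\<forall>b\<in>B. \<forall>l\<in>Ls. \<forall>m\<in>Ms.
        al b - be b l + de l + real m * lsize S l * (ph - ps) \<le> c b l m) \<and>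
     (\<forall>l\<in>Ls. (\<Sum>b\<in>B. be b l) - ga - de l + chi L2 l * mu \<le> 0) \<and>
     mu \<le> P"

definition drmp_feasible ::
  "'b set \<Rightarrow> 's set \<Rightarrow> ('s \<Rightarrow> nat) set \<Rightarrow> ('s \<Rightarrow> nat) set \<Rightarrow> ('b \<Rightarrow> ('s \<Rightarrow> nat) set) \<Rightarrow>
   ('b \<Rightarrow> ('s \<Rightarrow> nat) \<Rightarrow> nat set) \<Rightarrow> ('b \<Rightarrow> ('s \<Rightarrow> nat) \<Rightarrow> nat \<Rightarrow> real) \<Rightarrow> real \<Rightarrow>
   ('b \<Rightarrow> real) \<Rightarrow> ('b \<Rightarrow> ('s \<Rightarrow> nat) \<Rightarrow> real) \<Rightarrow> real \<Rightarrow> (('s \<Rightarrow> nat) \<Rightarrow> real) \<Rightarrow>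
   real \<Rightarrow> real \<Rightarrow> real \<Rightarrow> bool" where
  "drmp_feasible B S L1 L2 Lb Mb c P al be ga de mu ph ps \<longleftrightarrow>
     (\<forall>b\<in>B. \<forall>l\<in>Lb b. be b l \<ge> 0) \<and> ga \<ge> 0 \<and> (\<forall>l\<in>L1. de l \<ge> 0) \<and>
     mu \<ge> 0 \<and> ph \<ge> 0 \<and> ps \<ge> 0 \<and>
     (\<forall>b\<in>B. \<forall>l\<in>Lb b. \<forall>m\<in>Mb b l.
        al b - be b l + de l + real m * lsize S l * (ph - ps) \<le> c b l m) \<and>
     (\<forall>l\<in>L1. (\<Sum>b\<in>{b\<in>B. l \<in> Lb b}. be b l) - ga - de l + chi L2 l * mu \<le> 0) \<and>
     mu \<le> P"

definition drmp_optimal where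
  "drmp_optimal B S L1 L2 Lb Mb c k Ilo Ihi P al be ga de mu ph ps \<longleftrightarrow>
     drmp_feasible B S L1 L2 Lb Mb c P al be ga de mu ph ps \<and>
     (\<forall>al' be' ga' de' mu' ph' ps'.
        drmp_feasible B S L1 L2 Lb Mb c P al' be' ga' de' mu' ph' ps' \<longrightarrow>
        dmp_obj B k Ilo Ihi al' ga' mu' ph' ps' \<le> dmp_obj B k Ilo Ihi al ga mu ph ps)"

definition beta_bar where
  "beta_bar Lb be b l = (if l \<in> Lb b then be b l else 0)"

definition delta_bar where
  "delta_bar L1 de l = (if l \<in> L1 then de l else 0)"

definition cbar where
  "cbar S L1 Lb c al be de ph ps b l m =
     c b l m - al b + beta_bar Lb be b l - delta_bar L1 de l - real m * lsize S l * (ph - ps)"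

definition beta_check where
  "beta_check S Ms L1 Lb c al be de ph ps b l =
     (if l \<in> Lb b then be b l
      else neg_part (Min ((\<lambda>m. cbar S L1 Lb c al be de ph ps b l m) ` Ms)))"

definition delta_check where
  "delta_check B S Ms L1 Lb c al be de ph ps l =
     (if l \<in> L1 then de l
      else pos_part (Min {cbar S L1 Lb c al be de ph ps b l m | b m. b \<in> B \<and> m \<in> Ms}))"

definition cstar where
  "cstar S Ms L1 Lb c al be de ph ps b =
     (if Lb b = {} then 0
      else - neg_part (Min {cbar S L1 Lb c al be de ph ps b l m | l m. l \<in> Lb b \<and> m \<in> Ms}))"

definition dstar where
  "dstar B S Ms Ls L1 L2 Lb c al be ga de mu ph ps =
     (let D = Ls - (\<Inter>b\<in>B. Lb b) in
      if D = {} then 0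
      else - neg_part (Min ((\<lambda>l. - (\<Sum>b\<in>B. beta_check S Ms L1 Lb c al be de ph ps b l)
                                 + delta_check B S Ms L1 Lb c al be de ph ps l + ga - chi L2 l * mu) ` D)))"

end

theory Submission
  imports Defs
begin


inductive derivable :: "(('v \<Rightarrow> real) \<times> real) set \<Rightarrow> ('v \<Rightarrow> real) \<times> real \<Rightarrow> bool" for C where
  dmem: "c \<in> C \<Longrightarrow> derivable C c"
| dscale: "derivable C (a, r) \<Longrightarrow> t \<ge> 0 \<Longrightarrow> derivable C (\<lambda>v. t * a v, t * r)"
| dadd: "derivable C (a1, r1) \<Longrightarrow> derivable C (a2, r2) \<Longrightarrow> derivable C (\<lambda>v. a1 v + a2 v, r1 + r2)"

lemma derivable_trans:
  assumes "derivable C' d" "\<forall>c\<in>C'. derivable C c"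
  shows "derivable C d"
  using assms by (induction rule: derivable.induct) (auto intro: derivable.intros)

lemma derivable_mult:
  assumes "derivable C d" "finite C"
  shows "\<exists>lam. (\<forall>c\<in>C. lam c \<ge> 0) \<and> (\<forall>v. fst d v = (\<Sum>c\<in>C. lam c * fst c v))
              \<and> snd d = (\<Sum>c\<in>C. lam c * snd c)"
  using assms
proof (induction rule: derivable.induct)
  case (dmem c)
  show ?case
  proof (rule exI[of _ "\<lambda>c'. if c' = c then 1 else 0"], intro conjI ballI allI)
    have e: "(\<Sum>ca\<in>C. (if ca = c then 1 else 0) * f ca) = f c" for f :: "_ \<Rightarrow> real"
      using dmem by (subst sum.cong[OF refl, of _ _ "\<lambda>ca. if ca = c then f ca else 0"]) auto
    show "fst c v = (\<Sum>ca\<in>C. (if ca = c then 1 else 0) * fst ca v)" for v using e[of "\<lambda>c. fst c v"] by simp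
    show "snd c = (\<Sum>ca\<in>C. (if ca = c then 1 else 0) * snd ca)" using e[of snd] by simp
  qed auto
next
  case (dscale a r t)
  then obtain lam where l: "\<forall>c\<in>C. lam c \<ge> 0" "\<forall>v. a v = (\<Sum>c\<in>C. lam c * fst c v)"
    "r = (\<Sum>c\<in>C. lam c * snd c)" by auto
  show ?case
    by (rule exI[of _ "\<lambda>c. t * lam c"]) (use l dscale in \<open>auto simp: sum_distrib_left mult.assoc\<close>)
next
  case (dadd a1 r1 a2 r2)
  then obtain l1 l2 where l: "\<forall>c\<in>C. l1 c \<ge> 0" "\<forall>v. a1 v = (\<Sum>c\<in>C. l1 c * fst c v)"
    "r1 = (\<Sum>c\<in>C. l1 c * snd c)" "\<forall>c\<in>C. l2 c \<ge> 0" "\<forall>v. a2 v = (\<Sum>c\<in>C. l2 c * fst c v)"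
    "r2 = (\<Sum>c\<in>C. l2 c * snd c)" by auto
  show ?case
    by (rule exI[of _ "\<lambda>c. l1 c + l2 c"]) (use l in \<open>auto simp: sum.distrib distrib_right\<close>)
qed

lemma exists_between:
  fixes L U :: "'c \<Rightarrow> real"
  assumes "finite P" "finite N" "\<forall>p\<in>P. \<forall>n\<in>N. L n \<le> U p"
  shows "\<exists>t. (\<forall>p\<in>P. t \<le> U p) \<and> (\<forall>n\<in>N. L n \<le> t)"
proof (cases "N = {}")
  case True
  show ?thesis
  proof (cases "P = {}")
    case True with \<open>N = {}\<close> show ?thesis by auto
  next
    case False
    then show ?thesis using True assms
      by (intro exI[of _ "Min (U ` P)"]) auto
  qed
next
  case False
  then show ?thesis using assms
    by (intro exI[of _ "Max (L ` N)"]) (auto simp: Max_le_iff)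
qed

definition comb :: "'v \<Rightarrow> ('v \<Rightarrow> real) \<times> real \<Rightarrow> ('v \<Rightarrow> real) \<times> real \<Rightarrow> ('v \<Rightarrow> real) \<times> real" where
  "comb v0 c d = (\<lambda>v. (- fst d v0) * fst c v + fst c v0 * fst d v, (- fst d v0) * snd c + fst c v0 * snd d)"

lemma fm:
  assumes "finite V"
  shows "finite C \<Longrightarrow> (\<forall>c\<in>C. \<forall>v. v \<notin> V \<longrightarrow> fst c v = 0) \<Longrightarrow>
    \<not>(\<exists>z. \<forall>c\<in>C. (\<Sum>v\<in>V. fst c v * z v) \<le> snd c) \<Longrightarrow> \<exists>r<0. derivable C (\<lambda>_. 0, r)"
  using assms
proof (induction V arbitrary: C rule: finite_induct)
  case empty
  then obtain c where c: "c \<in> C" "snd c < 0" by force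
  have "fst c = (\<lambda>_. 0)" using empty.prems(2) c by auto
  then have "c = (\<lambda>_. 0, snd c)" by (metis prod.collapse)
  then show ?case using c by (metis dmem)
next
  case (insert v0 V)
  define P where "P = {c\<in>C. fst c v0 > 0}"
  define N where "N = {c\<in>C. fst c v0 < 0}"
  define Z where "Z = {c\<in>C. fst c v0 = 0}"
  define C' where "C' = Z \<union> (\<lambda>(c,d). comb v0 c d) ` (P \<times> N)"
  have fin: "finite C'" unfolding C'_def P_def N_def Z_def using insert.prems(1) by auto
  have supp: "\<forall>c\<in>C'. \<forall>v. v \<notin> V \<longrightarrow> fst c v = 0"
  proof (intro ballI allI impI)
    fix c v assume c: "c \<in> C'" and v: "v \<notin> V"
    show "fst c v = 0"
    proof (cases "v = v0")
      case True
      then show ?thesis using c unfolding C'_def Z_def comb_def by (auto simp: algebra_simps)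
    next
      case False
      then have "v \<notin> insert v0 V" using v by auto
      then have h: "\<forall>c\<in>C. fst c v = 0" using insert.prems(2) by auto
      show ?thesis using c unfolding C'_def Z_def P_def N_def comb_def
        by (auto; metis h fst_conv mult_zero_right mult_zero_left)
    qed
  qed
  have infeas: "\<not>(\<exists>z. \<forall>c\<in>C'. (\<Sum>v\<in>V. fst c v * z v) \<le> snd c)"
  proof
    assume "\<exists>z. \<forall>c\<in>C'. (\<Sum>v\<in>V. fst c v * z v) \<le> snd c"
    then obtain z where z: "\<forall>c\<in>C'. (\<Sum>v\<in>V. fst c v * z v) \<le> snd c" by blast
    define s where "s c = (\<Sum>v\<in>V. fst c v * z v)" for c :: "('a \<Rightarrow> real) \<times> real"
    have scomb: "s (comb v0 c d) = (- fst d v0) * s c + fst c v0 * s d" for c d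
      unfolding s_def comb_def sum_distrib_left sum_negf[symmetric] sum.distrib[symmetric]
      by (rule sum.cong) (auto simp: algebra_simps)
    have bnd: "(snd d - s d) / fst d v0 \<le> (snd c - s c) / fst c v0" if c: "c \<in> P" and d: "d \<in> N" for c d
    proof -
      have "comb v0 c d \<in> C'" unfolding C'_def using c d by auto
      then have "s (comb v0 c d) \<le> snd (comb v0 c d)" using z s_def by auto
      then have h: "(- fst d v0) * s c + fst c v0 * s d \<le> (- fst d v0) * snd c + fst c v0 * snd d"
        unfolding scomb by (simp add: comb_def)
      have c0: "fst c v0 > 0" and d0: "fst d v0 < 0" using c d P_def N_def by auto
      have "(snd d - s d) / fst d v0 = (s d - snd d) / (- fst d v0)" using d0 by (simp add: divide_simps)
      also have "\<dots> \<le> (snd c - s c) / fst c v0"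
        using h c0 d0 by (simp add: divide_le_eq le_divide_eq field_simps)
      finally show ?thesis .
    qed
    have "finite P" "finite N" unfolding P_def N_def using insert.prems(1) by auto
    from exists_between[OF this, of "\<lambda>d. (snd d - s d) / fst d v0" "\<lambda>c. (snd c - s c) / fst c v0"] bnd
    obtain t where t: "\<forall>c\<in>P. t \<le> (snd c - s c) / fst c v0" "\<forall>d\<in>N. (snd d - s d) / fst d v0 \<le> t"
      by blast
    define z' where "z' = z(v0 := t)"
    have sum': "(\<Sum>v\<in>insert v0 V. fst c v * z' v) = fst c v0 * t + s c" for c
    proof -
      have "(\<Sum>v\<in>V. fst c v * z' v) = s c" unfolding s_def z'_def
        using insert.hyps by (intro sum.cong) auto
      then show ?thesis using insert.hyps by (simp add: z'_def)
    qed
    have "\<forall>c\<in>C. (\<Sum>v\<in>insert v0 V. fst c v * z' v) \<le> snd c"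
    proof
      fix c assume c: "c \<in> C"
      consider "c \<in> P" | "c \<in> N" | "c \<in> Z" unfolding P_def N_def Z_def using c by fastforce
      then show "(\<Sum>v\<in>insert v0 V. fst c v * z' v) \<le> snd c"
      proof cases
        case 1
        then have "fst c v0 > 0" "t \<le> (snd c - s c) / fst c v0" using t(1) unfolding P_def by blast+
        then show ?thesis unfolding sum' by (simp add: le_divide_eq algebra_simps)
      next
        case 2
        then have "fst c v0 < 0" "(snd c - s c) / fst c v0 \<le> t" using t(2) unfolding N_def by blast+
        then show ?thesis unfolding sum' by (simp add: divide_le_eq algebra_simps)
      next
        case 3
        then have "c \<in> C'" unfolding C'_def by auto
        then show ?thesis using z 3 unfolding sum' s_def Z_def by auto
      qed
    qed
    then show False using insert.prems(3) by blast
  qed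
  obtain r where r: "r < 0" "derivable C' (\<lambda>_. 0, r)"
    using insert.IH[OF fin supp infeas] by blast
  have "\<forall>c\<in>C'. derivable C c"
  proof
    fix c assume "c \<in> C'"
    then consider "c \<in> Z" | p n where "p \<in> P" "n \<in> N" "c = comb v0 p n" unfolding C'_def by auto
    then show "derivable C c"
    proof cases
      case 1 then show ?thesis unfolding Z_def by (auto intro: dmem)
    next
      case 2
      have p: "derivable C (fst p, snd p)" "derivable C (fst n, snd n)" using 2 P_def N_def by (auto intro: dmem)
      have "derivable C (\<lambda>v. (- fst n v0) * fst p v, (- fst n v0) * snd p)"
        using 2 N_def by (intro dscale[OF p(1)]) auto
      moreover have "derivable C (\<lambda>v. fst p v0 * fst n v, fst p v0 * snd n)"
        using 2 P_def by (intro dscale[OF p(2)]) auto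
      ultimately have "derivable C (\<lambda>v. (- fst n v0) * fst p v + fst p v0 * fst n v,
                            (- fst n v0) * snd p + fst p v0 * snd n)"
        by (rule dadd)
      then show ?thesis using 2 by (simp add: comb_def)
    qed
  qed
  then show ?case using r derivable_trans by blast
qed

definition linV :: "'v set \<Rightarrow> (('v \<Rightarrow> real) \<Rightarrow> real) \<Rightarrow> bool" where
  "linV V f \<longleftrightarrow> (\<exists>a. \<forall>z. f z = (\<Sum>v\<in>V. a v * z v))"

lemma sum_fibres:
  fixes g :: "'i \<Rightarrow> 'c" and lam :: "'c \<Rightarrow> real"
  assumes "finite I"
  shows "(\<Sum>i\<in>I. lam (g i) / real (card {j\<in>I. g j = g i}) * h (g i)) = (\<Sum>c\<in>g ` I. lam c * h c)"
proof -
  have "(\<Sum>i\<in>I. lam (g i) / real (card {j\<in>I. g j = g i}) * h (g i))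
      = (\<Sum>c\<in>g ` I. \<Sum>i\<in>{x\<in>I. g x = c}. lam (g i) / real (card {j\<in>I. g j = g i}) * h (g i))"
    by (rule sum.image_gen[OF assms])
  also have "\<dots> = (\<Sum>c\<in>g ` I. lam c * h c)"
  proof (rule sum.cong[OF refl])
    fix c assume c: "c \<in> g ` I"
    have fin: "finite {x\<in>I. g x = c}" using assms by auto
    have ne: "{x\<in>I. g x = c} \<noteq> {}" using c by auto
    have "(\<Sum>i\<in>{x\<in>I. g x = c}. lam (g i) / real (card {j\<in>I. g j = g i}) * h (g i))
        = (\<Sum>i\<in>{x\<in>I. g x = c}. lam c / real (card {x\<in>I. g x = c}) * h c)"
      by (rule sum.cong) auto
    also have "\<dots> = lam c * h c" using fin ne by (simp add: card_gt_0_iff)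
    finally show "(\<Sum>i\<in>{x\<in>I. g x = c}. lam (g i) / real (card {j\<in>I. g j = g i}) * h (g i)) = lam c * h c" .
  qed
  finally show ?thesis .
qed

lemma farkas:
  fixes f :: "'i \<Rightarrow> ('v \<Rightarrow> real) \<Rightarrow> real"
  assumes V: "finite V" and I: "finite I" and lin: "\<forall>i\<in>I. linV V (f i)"
    and inf: "\<not>(\<exists>z. \<forall>i\<in>I. f i z \<le> r i)"
  shows "\<exists>mu. (\<forall>i\<in>I. mu i \<ge> 0) \<and> (\<forall>z. (\<Sum>i\<in>I. mu i * f i z) = 0) \<and> (\<Sum>i\<in>I. mu i * r i) < 0"
proof -
  from lin obtain a where a: "\<forall>i\<in>I. \<forall>z. f i z = (\<Sum>v\<in>V. a i v * z v)"
    unfolding linV_def by metis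
  define g where "g i = ((\<lambda>v. if v \<in> V then a i v else 0), r i)" for i
  define C where "C = g ` I"
  have fz: "f i z = (\<Sum>v\<in>V. fst (g i) v * z v)" if "i \<in> I" for i z
    using a that unfolding g_def by (auto intro: sum.cong)
  have fin: "finite C" unfolding C_def using I by auto
  have supp: "\<forall>c\<in>C. \<forall>v. v \<notin> V \<longrightarrow> fst c v = 0" unfolding C_def g_def by auto
  have infC: "\<not>(\<exists>z. \<forall>c\<in>C. (\<Sum>v\<in>V. fst c v * z v) \<le> snd c)"
  proof
    assume "\<exists>z. \<forall>c\<in>C. (\<Sum>v\<in>V. fst c v * z v) \<le> snd c"
    then obtain z where "\<forall>c\<in>C. (\<Sum>v\<in>V. fst c v * z v) \<le> snd c" by blast
    then have "\<forall>i\<in>I. f i z \<le> r i" unfolding C_def using fz by (auto simp: g_def)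
    then show False using inf by blast
  qed
  obtain r0 where r0: "r0 < 0" "derivable C (\<lambda>_. 0, r0)" using fm[OF V fin supp infC] by blast
  obtain lam where lam: "\<forall>c\<in>C. lam c \<ge> 0" "\<forall>v. 0 = (\<Sum>c\<in>C. lam c * fst c v)"
    "r0 = (\<Sum>c\<in>C. lam c * snd c)"
    using derivable_mult[OF r0(2) fin] by auto
  define mu where "mu i = lam (g i) / real (card {j\<in>I. g j = g i})" for i
  have fibre: "(\<Sum>i\<in>I. mu i * h (g i)) = (\<Sum>c\<in>C. lam c * h c)" for h
    unfolding mu_def C_def by (rule sum_fibres[OF I])
  show ?thesis
  proof (intro exI[of _ mu] conjI allI ballI)
    show "mu i \<ge> 0" if "i \<in> I" for i using lam(1) that unfolding mu_def C_def by auto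
    fix z
    have "(\<Sum>i\<in>I. mu i * f i z) = (\<Sum>i\<in>I. mu i * (\<Sum>v\<in>V. fst (g i) v * z v))"
      using fz by (auto intro: sum.cong)
    also have "\<dots> = (\<Sum>c\<in>C. lam c * (\<Sum>v\<in>V. fst c v * z v))"
      by (rule fibre)
    also have "\<dots> = (\<Sum>v\<in>V. (\<Sum>c\<in>C. lam c * fst c v) * z v)"
      by (simp add: sum_distrib_left sum_distrib_right mult.assoc sum.swap[of _ C])
    also have "\<dots> = 0" using lam(2) by (metis (no_types, lifting) mult_zero_left sum.neutral)
    finally show "(\<Sum>i\<in>I. mu i * f i z) = 0" .
  next
    have "(\<Sum>i\<in>I. mu i * r i) = (\<Sum>i\<in>I. mu i * snd (g i))" by (simp add: g_def)
    also have "\<dots> = r0" using fibre[of snd] lam(3) by simp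
    finally show "(\<Sum>i\<in>I. mu i * r i) < 0" using r0 by simp
  qed
qed

lemma linV_var: "v \<in> V \<Longrightarrow> finite V \<Longrightarrow> linV V (\<lambda>z. z v)"
  unfolding linV_def
proof (intro exI[of _ "\<lambda>u. if u = v then 1 else 0"] allI)
  fix z :: "'a \<Rightarrow> real" assume "v \<in> V" "finite V"
  have "(\<Sum>u\<in>V. (if u = v then 1 else 0) * z u) = (\<Sum>u\<in>V. if u = v then z u else 0)"
    by (rule sum.cong) auto
  then show "z v = (\<Sum>u\<in>V. (if u = v then 1 else 0) * z u)" using \<open>v \<in> V\<close> \<open>finite V\<close> by simp
qed

lemma linV_add: "linV V f \<Longrightarrow> linV V g \<Longrightarrow> linV V (\<lambda>z. f z + g z)"
proof -
  assume "linV V f" "linV V g"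
  then obtain a b where "\<forall>z. f z = (\<Sum>v\<in>V. a v * z v)" "\<forall>z. g z = (\<Sum>v\<in>V. b v * z v)"
    unfolding linV_def by blast
  then show ?thesis unfolding linV_def
    by (intro exI[of _ "\<lambda>v. a v + b v"]) (simp add: sum.distrib distrib_right)
qed

lemma linV_scale: "linV V f \<Longrightarrow> linV V (\<lambda>z. t * f z)"
proof -
  assume "linV V f"
  then obtain a where "\<forall>z. f z = (\<Sum>v\<in>V. a v * z v)" unfolding linV_def by blast
  then show ?thesis unfolding linV_def
    by (intro exI[of _ "\<lambda>v. t * a v"]) (simp add: sum_distrib_left mult.assoc)
qed

lemma linV_0: "linV V (\<lambda>z. 0)"
  unfolding linV_def by (rule exI[of _ "\<lambda>v. 0"]) simp

lemma linV_sum: "finite A \<Longrightarrow> (\<forall>a\<in>A. linV V (f a)) \<Longrightarrow> linV V (\<lambda>z. \<Sum>a\<in>A. f a z)"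
  by (induction A rule: finite_induct) (auto intro: linV_add linV_0)


lemma sum_swap_Lb:
  assumes "finite B" "finite L1" "\<forall>b\<in>B. Lb b \<subseteq> L1"
  shows "(\<Sum>b\<in>B. \<Sum>l\<in>Lb b. g b l) = (\<Sum>l\<in>L1. \<Sum>b\<in>{b\<in>B. l \<in> Lb b}. g b l)"
proof -
  have "(\<Sum>b\<in>B. \<Sum>l\<in>Lb b. g b l) = (\<Sum>b\<in>B. \<Sum>l\<in>{l\<in>L1. l \<in> Lb b}. g b l)"
    using assms(3) by (intro sum.cong refl) auto
  also have "\<dots> = (\<Sum>l\<in>L1. \<Sum>b\<in>{b\<in>B. l \<in> Lb b}. g b l)"
    using sum.swap_restrict[OF assms(1,2), of g "\<lambda>b l. l \<in> Lb b"] by simp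
  finally show ?thesis .
qed

lemma sum_chi:
  fixes y :: "('s \<Rightarrow> nat) \<Rightarrow> real"
  assumes "finite L1"
  shows "(\<Sum>l\<in>L1. chi L2 l * y l) = (\<Sum>l\<in>L1 - L2. y l)"
proof -
  have "(\<Sum>l\<in>L1. chi L2 l * y l) = (\<Sum>l\<in>L1. if l \<notin> L2 then y l else 0)"
    by (rule sum.cong) (auto simp: chi_def)
  also have "\<dots> = (\<Sum>l\<in>{l\<in>L1. l \<notin> L2}. y l)"
    using assms by (simp add: sum.inter_filter)
  also have "{l\<in>L1. l \<notin> L2} = L1 - L2" by auto
  finally show ?thesis .
qed

lemma weak_duality:
  assumes fin: "finite B" "finite L1" and Lb: "\<forall>b\<in>B. Lb b \<subseteq> L1"
    and pf: "rmp_feasible B S L1 L2 Lb Mb k Ilo Ihi x y p"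
    and df: "drmp_feasible B S L1 L2 Lb Mb c P al be ga de mu ph ps"
  shows "dmp_obj B k Ilo Ihi al ga mu ph ps \<le> rmp_obj B Lb Mb c P x y p"
proof -
  define X where "X b l = (\<Sum>m\<in>Mb b l. x b l m)" for b l
  define Q where "Q = (\<Sum>b\<in>B. \<Sum>l\<in>Lb b. \<Sum>m\<in>Mb b l. real m * lsize S l * x b l m)"
  define Y where "Y = (\<Sum>l\<in>L1. y l)"
  define Y' where "Y' = (\<Sum>l\<in>L1 - L2. y l)"
  have finLb: "finite (Lb b)" if "b \<in> B" for b using Lb fin that finite_subset by blast
  from pf have x0: "\<forall>b\<in>B. \<forall>l\<in>Lb b. \<forall>m\<in>Mb b l. x b l m \<ge> 0" and y0: "\<forall>l\<in>L1. y l \<ge> 0" and p0: "p \<ge> 0"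
    and a1: "\<forall>b\<in>B. (\<Sum>l\<in>Lb b. X b l) = 1" and bt: "\<forall>b\<in>B. \<forall>l\<in>Lb b. y l - X b l \<ge> 0"
    and gk: "Y \<le> real k" and dt: "\<forall>l\<in>L1. (\<Sum>b\<in>{b\<in>B. l \<in> Lb b}. X b l) - y l \<ge> 0"
    and mu1: "Y' + p \<ge> 1" and qlo: "Q \<ge> Ilo" and qhi: "Q \<le> Ihi"
    unfolding rmp_feasible_def X_def Q_def Y_def Y'_def by auto
  from df have be0: "\<forall>b\<in>B. \<forall>l\<in>Lb b. be b l \<ge> 0" and ga0: "ga \<ge> 0" and de0: "\<forall>l\<in>L1. de l \<ge> 0"
    and mu0: "mu \<ge> 0" and ph0: "ph \<ge> 0" and ps0: "ps \<ge> 0"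
    and xc: "\<forall>b\<in>B. \<forall>l\<in>Lb b. \<forall>m\<in>Mb b l. al b - be b l + de l + real m * lsize S l * (ph - ps) \<le> c b l m"
    and yc: "\<forall>l\<in>L1. (\<Sum>b\<in>{b\<in>B. l \<in> Lb b}. be b l) - ga - de l + chi L2 l * mu \<le> 0"
    and muP: "mu \<le> P"
    unfolding drmp_feasible_def by auto
  have step1: "(\<Sum>b\<in>B. \<Sum>l\<in>Lb b. \<Sum>m\<in>Mb b l. c b l m * x b l m)
      \<ge> (\<Sum>b\<in>B. \<Sum>l\<in>Lb b. \<Sum>m\<in>Mb b l. (al b - be b l + de l + real m * lsize S l * (ph - ps)) * x b l m)"
    using xc x0 by (intro sum_mono mult_right_mono) auto
  have step2: "(\<Sum>m\<in>Mb b l. (al b - be b l + de l + real m * lsize S l * (ph - ps)) * x b l m)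
      = al b * X b l - be b l * X b l + de l * X b l + (ph - ps) * (\<Sum>m\<in>Mb b l. real m * lsize S l * x b l m)"
    for b l unfolding X_def by (simp add: algebra_simps sum.distrib sum_distrib_left sum_subtractf)
  have step3: "(\<Sum>b\<in>B. \<Sum>l\<in>Lb b. \<Sum>m\<in>Mb b l. (al b - be b l + de l + real m * lsize S l * (ph - ps)) * x b l m)
      = (\<Sum>b\<in>B. al b * (\<Sum>l\<in>Lb b. X b l)) - (\<Sum>b\<in>B. \<Sum>l\<in>Lb b. be b l * X b l)
        + (\<Sum>b\<in>B. \<Sum>l\<in>Lb b. de l * X b l) + (ph - ps) * Q"
    unfolding step2 Q_def by (simp add: sum.distrib sum_subtractf sum_distrib_left)
  have s_al: "(\<Sum>b\<in>B. al b * (\<Sum>l\<in>Lb b. X b l)) = (\<Sum>b\<in>B. al b)" using a1 by simp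
  have s_be: "(\<Sum>b\<in>B. \<Sum>l\<in>Lb b. be b l * X b l) \<le> (\<Sum>b\<in>B. \<Sum>l\<in>Lb b. be b l * y l)"
    using be0 bt by (intro sum_mono mult_left_mono) auto
  have s_be2: "(\<Sum>b\<in>B. \<Sum>l\<in>Lb b. be b l * y l) = (\<Sum>l\<in>L1. y l * (\<Sum>b\<in>{b\<in>B. l \<in> Lb b}. be b l))"
    unfolding sum_swap_Lb[OF fin Lb] by (simp add: sum_distrib_left mult.commute)
  have s_de: "(\<Sum>b\<in>B. \<Sum>l\<in>Lb b. de l * X b l) = (\<Sum>l\<in>L1. de l * (\<Sum>b\<in>{b\<in>B. l \<in> Lb b}. X b l))"
    unfolding sum_swap_Lb[OF fin Lb] by (simp add: sum_distrib_left)
  have s_de2: "(\<Sum>l\<in>L1. de l * (\<Sum>b\<in>{b\<in>B. l \<in> Lb b}. X b l)) \<ge> (\<Sum>l\<in>L1. de l * y l)"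
    using de0 dt by (intro sum_mono mult_left_mono) auto
  have s_y: "(\<Sum>l\<in>L1. de l * y l) - (\<Sum>l\<in>L1. y l * (\<Sum>b\<in>{b\<in>B. l \<in> Lb b}. be b l))
       \<ge> (\<Sum>l\<in>L1. y l * (chi L2 l * mu - ga))"
  proof -
    have "(\<Sum>l\<in>L1. de l * y l) - (\<Sum>l\<in>L1. y l * (\<Sum>b\<in>{b\<in>B. l \<in> Lb b}. be b l))
        = (\<Sum>l\<in>L1. y l * (de l - (\<Sum>b\<in>{b\<in>B. l \<in> Lb b}. be b l)))"
      by (simp add: sum_subtractf algebra_simps)
    also have "\<dots> \<ge> (\<Sum>l\<in>L1. y l * (chi L2 l * mu - ga))"
      using y0 yc by (intro sum_mono mult_left_mono) (auto simp: algebra_simps)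
    finally show ?thesis .
  qed
  have s_y2: "(\<Sum>l\<in>L1. y l * (chi L2 l * mu - ga)) = mu * Y' - ga * Y"
  proof -
    have "(\<Sum>l\<in>L1. y l * (chi L2 l * mu - ga)) = (\<Sum>l\<in>L1. mu * (chi L2 l * y l) - ga * y l)"
      by (rule sum.cong) (auto simp: algebra_simps)
    also have "\<dots> = mu * (\<Sum>l\<in>L1. chi L2 l * y l) - ga * Y"
      unfolding Y_def by (simp add: sum_subtractf sum_distrib_left)
    finally show ?thesis unfolding Y'_def using sum_chi[OF fin(2), of L2 y] by simp
  qed
  have n1: "ga * Y \<le> ga * real k" using gk ga0 by (rule mult_left_mono)
  have "mu * 1 \<le> mu * (Y' + p)" using mu1 mu0 by (rule mult_left_mono)
  then have n2: "mu * Y' + mu * p \<ge> mu" by (simp add: distrib_left)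
  have n3: "mu * p \<le> P * p" using muP p0 by (rule mult_right_mono)
  have n4: "ph * Q \<ge> ph * Ilo" using qlo ph0 by (rule mult_left_mono)
  have n5: "ps * Q \<le> ps * Ihi" using qhi ps0 by (rule mult_left_mono)
  have "rmp_obj B Lb Mb c P x y p \<ge> (\<Sum>b\<in>B. al b) - (\<Sum>b\<in>B. \<Sum>l\<in>Lb b. be b l * X b l)
        + (\<Sum>b\<in>B. \<Sum>l\<in>Lb b. de l * X b l) + (ph - ps) * Q + P * p"
    unfolding rmp_obj_def using step1 step3 s_al by linarith
  moreover have "(ph - ps) * Q = ph * Q - ps * Q" by (simp add: algebra_simps)
  moreover have "real k * ga = ga * real k" "Ilo * ph = ph * Ilo" "Ihi * ps = ps * Ihi" by simp_all
  ultimately show ?thesis unfolding dmp_obj_def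
    using s_be s_be2 s_de s_de2 s_y s_y2 n1 n2 n3 n4 n5 by linarith
qed


datatype ('b,'l) dv = Al 'b | Be 'b 'l | Ga | De 'l | Mu | Ph | Ps
datatype ('b,'l) dc = CX 'b 'l nat | CY 'l | CP | SB 'b 'l | SG | SD 'l | SM | SPh | SPs | CO

definition fcon where
 "fcon B S L2 Lb k Ilo Ihi i z = (case i of
    CX b l m \<Rightarrow> z (Al b) - z (Be b l) + z (De l) + real m * lsize S l * (z Ph - z Ps)
  | CY l \<Rightarrow> (\<Sum>b\<in>{b\<in>B. l \<in> Lb b}. z (Be b l)) - z Ga - z (De l) + chi L2 l * z Mu
  | CP \<Rightarrow> z Mu | SB b l \<Rightarrow> - z (Be b l) | SG \<Rightarrow> - z Ga | SD l \<Rightarrow> - z (De l)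
  | SM \<Rightarrow> - z Mu | SPh \<Rightarrow> - z Ph | SPs \<Rightarrow> - z Ps
  | CO \<Rightarrow> - ((\<Sum>b\<in>B. z (Al b)) - real k * z Ga + Ilo * z Ph - Ihi * z Ps + z Mu))"

definition rcon where
 "rcon c P zr i = (case i of CX b l m \<Rightarrow> c b l m | CP \<Rightarrow> P | CO \<Rightarrow> - zr | _ \<Rightarrow> 0)"

definition VV where
 "VV B Lb L1 = Al ` B \<union> (\<lambda>(b,l). Be b l) ` (SIGMA b:B. Lb b) \<union> {Ga} \<union> De ` L1 \<union> {Mu, Ph, Ps}"

definition II where
 "II B Lb Mb L1 = (\<lambda>(b,l,m). CX b l m) ` (SIGMA b:B. SIGMA l:Lb b. Mb b l) \<union> CY ` L1 \<union> {CP}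
    \<union> (\<lambda>(b,l). SB b l) ` (SIGMA b:B. Lb b) \<union> {SG} \<union> SD ` L1 \<union> {SM, SPh, SPs, CO}"

lemma sum_II:
  assumes fin: "finite B" "finite L1" "\<forall>b\<in>B. Lb b \<subseteq> L1" "\<forall>b\<in>B. \<forall>l\<in>Lb b. finite (Mb b l)"
  shows "(\<Sum>i\<in>II B Lb Mb L1. h i) =
     (\<Sum>b\<in>B. \<Sum>l\<in>Lb b. \<Sum>m\<in>Mb b l. h (CX b l m)) + (\<Sum>l\<in>L1. h (CY l)) + h CP
     + (\<Sum>b\<in>B. \<Sum>l\<in>Lb b. h (SB b l)) + h SG + (\<Sum>l\<in>L1. h (SD l)) + h SM + h SPh + h SPs + h CO"
proof -
  have finLb: "finite (Lb b)" if "b \<in> B" for b using fin(2,3) that finite_subset by metis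
  define A1 where "A1 = (SIGMA b:B. SIGMA l:Lb b. Mb b l)"
  define A4 where "A4 = (SIGMA b:B. Lb b)"
  have fA1: "finite A1" unfolding A1_def using fin finLb by (intro finite_SigmaI) auto
  have fA4: "finite A4" unfolding A4_def using fin finLb by (intro finite_SigmaI) auto
  have s1: "(\<Sum>i\<in>(\<lambda>(b,l,m). CX b l m) ` A1. h i) = (\<Sum>b\<in>B. \<Sum>l\<in>Lb b. \<Sum>m\<in>Mb b l. h (CX b l m))"
  proof -
    have "(\<Sum>i\<in>(\<lambda>(b,l,m). CX b l m) ` A1. h i) = (\<Sum>(b,l,m)\<in>A1. h (CX b l m))"
      by (subst sum.reindex) (auto simp: inj_on_def case_prod_beta)
    also have "\<dots> = (\<Sum>b\<in>B. \<Sum>(l,m)\<in>(SIGMA l:Lb b. Mb b l). h (CX b l m))"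
      unfolding A1_def using fin finLb by (subst sum.Sigma[symmetric]) (auto intro!: finite_SigmaI)
    also have "\<dots> = (\<Sum>b\<in>B. \<Sum>l\<in>Lb b. \<Sum>m\<in>Mb b l. h (CX b l m))"
      using fin finLb by (intro sum.cong refl) (subst sum.Sigma[symmetric], auto)
    finally show ?thesis .
  qed
  have s4: "(\<Sum>i\<in>(\<lambda>(b,l). SB b l) ` A4. h i) = (\<Sum>b\<in>B. \<Sum>l\<in>Lb b. h (SB b l))"
  proof -
    have "(\<Sum>i\<in>(\<lambda>(b,l). SB b l) ` A4. h i) = (\<Sum>(b,l)\<in>A4. h (SB b l))"
      by (subst sum.reindex) (auto simp: inj_on_def case_prod_beta)
    also have "\<dots> = (\<Sum>b\<in>B. \<Sum>l\<in>Lb b. h (SB b l))"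
      unfolding A4_def using fin finLb by (subst sum.Sigma[symmetric]) auto
    finally show ?thesis .
  qed
  have s2: "(\<Sum>i\<in>CY ` L1. h i) = (\<Sum>l\<in>L1. h (CY l))" by (subst sum.reindex) (auto simp: inj_on_def)
  have s6: "(\<Sum>i\<in>SD ` L1. h i) = (\<Sum>l\<in>L1. h (SD l))" by (subst sum.reindex) (auto simp: inj_on_def)
  have f1: "finite ((\<lambda>(b,l,m). CX b l m) ` A1)" using fA1 by simp
  have f4: "finite ((\<lambda>(b,l). SB b l) ` A4)" using fA4 by simp
  have "II B Lb Mb L1 = (\<lambda>(b,l,m). CX b l m) ` A1 \<union> CY ` L1 \<union> {CP} \<union> (\<lambda>(b,l). SB b l) ` A4
     \<union> {SG} \<union> SD ` L1 \<union> {SM, SPh, SPs, CO}" unfolding II_def A1_def A4_def by simp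
  then have "(\<Sum>i\<in>II B Lb Mb L1. h i) = (\<Sum>i\<in>(\<lambda>(b,l,m). CX b l m) ` A1. h i) + (\<Sum>i\<in>CY ` L1. h i) + h CP
     + (\<Sum>i\<in>(\<lambda>(b,l). SB b l) ` A4. h i) + h SG + (\<Sum>i\<in>SD ` L1. h i) + h SM + h SPh + h SPs + h CO"
  proof -
    define U1 where "U1 = (\<lambda>(b,l,m). CX b l m) ` A1"
    define U4 where "U4 = (\<lambda>(b,l). SB b l) ` A4"
    have fU: "finite U1" "finite U4" "finite (CY ` L1)" "finite (SD ` L1)" using f1 f4 fin(2) U1_def U4_def by auto
    have d1: "sum h (U1 \<union> CY ` L1) = sum h U1 + sum h (CY ` L1)"
      by (rule sum.union_disjoint) (use fU in \<open>auto simp: U1_def\<close>)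
    have d2: "sum h (U1 \<union> CY ` L1 \<union> U4) = sum h (U1 \<union> CY ` L1) + sum h U4"
      by (rule sum.union_disjoint) (use fU in \<open>auto simp: U1_def U4_def\<close>)
    have d3: "sum h (U1 \<union> CY ` L1 \<union> U4 \<union> SD ` L1) = sum h (U1 \<union> CY ` L1 \<union> U4) + sum h (SD ` L1)"
      by (rule sum.union_disjoint) (use fU in \<open>auto simp: U1_def U4_def\<close>)
    have e: "(\<lambda>(b,l,m). CX b l m) ` A1 \<union> CY ` L1 \<union> {CP} \<union> (\<lambda>(b,l). SB b l) ` A4
     \<union> {SG} \<union> SD ` L1 \<union> {SM, SPh, SPs, CO} = {SM, SPh, SPs, CO, SG, CP} \<union> (U1 \<union> CY ` L1 \<union> U4 \<union> SD ` L1)"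
      unfolding U1_def U4_def by auto
    have "sum h ({SM, SPh, SPs, CO, SG, CP} \<union> (U1 \<union> CY ` L1 \<union> U4 \<union> SD ` L1))
        = sum h {SM, SPh, SPs, CO, SG, CP} + sum h (U1 \<union> CY ` L1 \<union> U4 \<union> SD ` L1)"
      by (rule sum.union_disjoint) (use fU in \<open>auto simp: U1_def U4_def\<close>)
    then show ?thesis using \<open>II B Lb Mb L1 = _\<close> e d1 d2 d3 unfolding U1_def[symmetric] U4_def[symmetric]
      by (simp add: algebra_simps)
  qed
  then show ?thesis unfolding s1 s2 s4 s6 .
qed

lemma linV_diff: "linV V f \<Longrightarrow> linV V g \<Longrightarrow> linV V (\<lambda>z. f z - g z)"
proof -
  assume "linV V f" "linV V g"
  then have "linV V (\<lambda>z. f z + (-1) * g z)" by (intro linV_add linV_scale)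
  then show ?thesis by simp
qed

lemma linV_neg: "linV V f \<Longrightarrow> linV V (\<lambda>z. - f z)"
proof -
  assume "linV V f"
  then have "linV V (\<lambda>z. (-1) * f z)" by (intro linV_scale)
  then show ?thesis by simp
qed

lemma II_cases:
  assumes "i \<in> II B Lb Mb L1"
  obtains (X) b l m where "i = CX b l m" "b \<in> B" "l \<in> Lb b" "m \<in> Mb b l"
    | (Y) l where "i = CY l" "l \<in> L1"
    | (P) "i = CP"
    | (SB) b l where "i = SB b l" "b \<in> B" "l \<in> Lb b"
    | (SG) "i = SG"
    | (SD) l where "i = SD l" "l \<in> L1"
    | (SM) "i = SM" | (SPh) "i = SPh" | (SPs) "i = SPs" | (CO) "i = CO"
  using assms unfolding II_def by auto

lemma lin_fcon:
  assumes "i \<in> II B Lb Mb L1" and fin: "finite B" "finite L1" and Lb: "\<forall>b\<in>B. Lb b \<subseteq> L1"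
  shows "linV (VV B Lb L1) (fcon B S L2 Lb k Ilo Ihi i)"
proof -
  let ?V = "VV B Lb L1"
  have fV: "finite ?V"
  proof -
    have "finite (SIGMA b:B. Lb b)" using fin Lb by (intro finite_SigmaI) (auto intro: finite_subset)
    then show ?thesis unfolding VV_def using fin by auto
  qed
  have vAl: "b \<in> B \<Longrightarrow> linV ?V (\<lambda>z. z (Al b))" for b by (rule linV_var[OF _ fV]) (auto simp: VV_def)
  have vBe: "b \<in> B \<Longrightarrow> l \<in> Lb b \<Longrightarrow> linV ?V (\<lambda>z. z (Be b l))" for b l by (rule linV_var[OF _ fV]) (auto simp: VV_def)
  have vDe: "l \<in> L1 \<Longrightarrow> linV ?V (\<lambda>z. z (De l))" for l by (rule linV_var[OF _ fV]) (auto simp: VV_def)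
  have vGa: "linV ?V (\<lambda>z. z Ga)" and vMu: "linV ?V (\<lambda>z. z Mu)" and vPh: "linV ?V (\<lambda>z. z Ph)"
    and vPs: "linV ?V (\<lambda>z. z Ps)" by (rule linV_var[OF _ fV]; simp add: VV_def)+
  from assms(1) show ?thesis
  proof (cases rule: II_cases)
    case (X b l m)
    then have "l \<in> L1" using Lb by auto
    have "linV ?V (\<lambda>z. z (Al b) - z (Be b l) + z (De l) + real m * lsize S l * (z Ph - z Ps))"
      using X \<open>l \<in> L1\<close> by (intro linV_add linV_diff linV_scale vAl vBe vDe vPh vPs)
    then show ?thesis using X by (simp add: fcon_def[abs_def])
  next
    case (Y l)
    have "linV ?V (\<lambda>z. (\<Sum>b\<in>{b\<in>B. l \<in> Lb b}. z (Be b l)) - z Ga - z (De l) + chi L2 l * z Mu)"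
      using Y fin by (intro linV_add linV_diff linV_scale linV_sum vBe vDe vGa vMu) (auto intro: vBe)
    then show ?thesis using Y by (simp add: fcon_def[abs_def])
  next
    case CO
    have "linV ?V (\<lambda>z. - ((\<Sum>b\<in>B. z (Al b)) - real k * z Ga + Ilo * z Ph - Ihi * z Ps + z Mu))"
      using fin by (intro linV_neg linV_add linV_diff linV_scale linV_sum vAl vGa vPh vPs vMu) (auto intro: vAl)
    then show ?thesis using CO by (simp add: fcon_def[abs_def])
  qed (auto simp: fcon_def[abs_def] intro: linV_neg vBe vGa vDe vMu vPh vPs vMu)
qed

lemma rmp_scale:
  fixes X :: "'b \<Rightarrow> ('s \<Rightarrow> nat) \<Rightarrow> nat \<Rightarrow> real"
  assumes t: "t > 0"
    and X0: "\<forall>b\<in>B. \<forall>l\<in>Lb b. \<forall>m\<in>Mb b l. X b l m \<ge> 0" and Y0: "\<forall>l\<in>L1. Y l \<ge> 0" and p0: "pp \<ge> 0"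
    and A: "\<forall>b\<in>B. (\<Sum>l\<in>Lb b. \<Sum>m\<in>Mb b l. X b l m) = t"
    and Bt: "\<forall>b\<in>B. \<forall>l\<in>Lb b. Y l - (\<Sum>m\<in>Mb b l. X b l m) \<ge> 0"
    and G: "(\<Sum>l\<in>L1. Y l) \<le> t * real k"
    and Dt: "\<forall>l\<in>L1. (\<Sum>b\<in>{b\<in>B. l \<in> Lb b}. \<Sum>m\<in>Mb b l. X b l m) - Y l \<ge> 0"
    and Mu: "(\<Sum>l\<in>L1 - L2. Y l) + pp \<ge> t"
    and Q1: "(\<Sum>b\<in>B. \<Sum>l\<in>Lb b. \<Sum>m\<in>Mb b l. real m * lsize S l * X b l m) \<ge> t * Ilo"
    and Q2: "(\<Sum>b\<in>B. \<Sum>l\<in>Lb b. \<Sum>m\<in>Mb b l. real m * lsize S l * X b l m) \<le> t * Ihi"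
  shows "rmp_feasible B S L1 L2 Lb Mb k Ilo Ihi (\<lambda>b l m. X b l m / t) (\<lambda>l. Y l / t) (pp / t)"
proof -
  have dsum: "(\<Sum>a\<in>A. g a / t) = (\<Sum>a\<in>A. g a) / t" for A and g :: "'z \<Rightarrow> real"
    by (simp add: sum_divide_distrib)
  have dsum2: "(\<Sum>a\<in>A. c * (g a / t)) = (\<Sum>a\<in>A. c * g a) / t" for A c and g :: "'z \<Rightarrow> real"
    by (simp add: sum_divide_distrib)
  have Q1': "(\<Sum>b\<in>B. \<Sum>l\<in>Lb b. \<Sum>m\<in>Mb b l. real m * lsize S l * (X b l m / t)) \<ge> Ilo"
    using Q1 t by (simp add: dsum2 dsum pos_le_divide_eq mult.commute)
  have Q2': "(\<Sum>b\<in>B. \<Sum>l\<in>Lb b. \<Sum>m\<in>Mb b l. real m * lsize S l * (X b l m / t)) \<le> Ihi"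
    using Q2 t by (simp add: dsum2 dsum pos_divide_le_eq mult.commute)
  show ?thesis unfolding rmp_feasible_def
  proof (intro conjI ballI)
    show "X b l m / t \<ge> 0" if "b \<in> B" "l \<in> Lb b" "m \<in> Mb b l" for b l m using X0 that t by auto
    show "Y l / t \<ge> 0" if "l \<in> L1" for l using Y0 that t by auto
    show "pp / t \<ge> 0" using p0 t by auto
    show "(\<Sum>l\<in>Lb b. \<Sum>m\<in>Mb b l. X b l m / t) = 1" if "b \<in> B" for b using A that t by (simp add: dsum)
    show "Y l / t - (\<Sum>m\<in>Mb b l. X b l m / t) \<ge> 0" if "b \<in> B" "l \<in> Lb b" for b l
      using Bt that t by (simp add: dsum diff_divide_distrib[symmetric])
    show "- (\<Sum>l\<in>L1. Y l / t) \<ge> - real k" using G t by (simp add: dsum pos_divide_le_eq mult.commute)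
    show "(\<Sum>b\<in>{b\<in>B. l \<in> Lb b}. \<Sum>m\<in>Mb b l. X b l m / t) - Y l / t \<ge> 0" if "l \<in> L1" for l
      using Dt that t by (simp add: dsum diff_divide_distrib[symmetric])
    show "(\<Sum>l\<in>L1 - L2. Y l / t) + pp / t \<ge> 1" using Mu t by (simp add: dsum add_divide_distrib[symmetric])
    show "(\<Sum>b\<in>B. \<Sum>l\<in>Lb b. \<Sum>m\<in>Mb b l. real m * lsize S l * (X b l m / t)) \<ge> Ilo" by (rule Q1')
    show "- (\<Sum>b\<in>B. \<Sum>l\<in>Lb b. \<Sum>m\<in>Mb b l. real m * lsize S l * (X b l m / t)) \<ge> - Ihi" using Q2' by simp
  qed
qed


lemma mult_if01: "(x::real) * (if P then y else 0) = (if P then x * y else 0)" by simp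
lemma if_conj0: "(if P \<and> Q then (x::real) else 0) = (if P then (if Q then x else 0) else 0)" by simp
lemma sum_if_const: "(\<Sum>a\<in>A. if C then f a else (0::real)) = (if C then (\<Sum>a\<in>A. f a) else 0)" by simp
lemma sum_if_eq: "finite A \<Longrightarrow> (\<Sum>a\<in>A. if a = a0 then f a else (0::real)) = (if a0 \<in> A then f a0 else 0)" by simp

lemma strong_duality:
  fixes c :: "'b \<Rightarrow> ('s \<Rightarrow> nat) \<Rightarrow> nat \<Rightarrow> real"
  assumes fin: "finite B" "finite L1" and Lb: "\<forall>b\<in>B. Lb b \<subseteq> L1"
    and Mbf: "\<forall>b\<in>B. \<forall>l\<in>Lb b. finite (Mb b l)"
    and po: "rmp_optimal B S L1 L2 Lb Mb c k Ilo Ihi P x y p"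
    and dopt: "drmp_optimal B S L1 L2 Lb Mb c k Ilo Ihi P al be ga de mu ph ps"
  shows "rmp_obj B Lb Mb c P x y p = dmp_obj B k Ilo Ihi al ga mu ph ps"
proof -
  define zR where "zR = rmp_obj B Lb Mb c P x y p"
  define D where "D = dmp_obj B k Ilo Ihi al ga mu ph ps"
  have pfeas: "rmp_feasible B S L1 L2 Lb Mb k Ilo Ihi x y p" using po unfolding rmp_optimal_def by auto
  have dfeas: "drmp_feasible B S L1 L2 Lb Mb c P al be ga de mu ph ps" using dopt unfolding drmp_optimal_def by auto
  have le: "D \<le> zR" unfolding D_def zR_def by (rule weak_duality[OF fin Lb pfeas dfeas])
  have "\<not> D < zR"
  proof
    assume lt: "D < zR"
    define V where "V = VV B Lb L1"
    define I where "I = II B Lb Mb L1"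
    define f where "f = fcon B S L2 Lb k Ilo Ihi"
    define r where "r = rcon c P zR"
    have finLb: "finite (Lb b)" if "b \<in> B" for b using fin(2) Lb that finite_subset by metis
    have fV: "finite V" unfolding V_def VV_def using fin finLb by (auto intro!: finite_SigmaI)
    have fI: "finite I" unfolding I_def II_def using fin finLb Mbf by (auto intro!: finite_SigmaI)
    have lin: "\<forall>i\<in>I. linV V (f i)" unfolding I_def V_def f_def using lin_fcon fin Lb by blast
    have memX: "CX b l m \<in> I" if "b \<in> B" "l \<in> Lb b" "m \<in> Mb b l" for b l m
      using that unfolding I_def II_def by (auto simp: image_iff)
    have memY: "CY l \<in> I" if "l \<in> L1" for l using that unfolding I_def II_def by auto
    have memSB: "SB b l \<in> I" if "b \<in> B" "l \<in> Lb b" for b l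
      using that unfolding I_def II_def by (auto simp: image_iff)
    have memSD: "SD l \<in> I" if "l \<in> L1" for l using that unfolding I_def II_def by auto
    have memO: "CP \<in> I" "SG \<in> I" "SM \<in> I" "SPh \<in> I" "SPs \<in> I" "CO \<in> I" unfolding I_def II_def by auto
    have infeas: "\<not>(\<exists>z. \<forall>i\<in>I. f i z \<le> r i)"
    proof
      assume "\<exists>z. \<forall>i\<in>I. f i z \<le> r i"
      then obtain z where z: "\<forall>i\<in>I. f i z \<le> r i" by blast
      have "drmp_feasible B S L1 L2 Lb Mb c P (\<lambda>b. z (Al b)) (\<lambda>b l. z (Be b l)) (z Ga) (\<lambda>l. z (De l)) (z Mu) (z Ph) (z Ps)"
        unfolding drmp_feasible_def
      proof (intro conjI ballI)
        show "z (Be b l) \<ge> 0" if "b \<in> B" "l \<in> Lb b" for b l using z memSB[OF that] by (fastforce simp: f_def r_def fcon_def rcon_def)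
        show "z Ga \<ge> 0" using z memO by (fastforce simp: f_def r_def fcon_def rcon_def)
        show "z (De l) \<ge> 0" if "l \<in> L1" for l using z memSD[OF that] by (fastforce simp: f_def r_def fcon_def rcon_def)
        show "z Mu \<ge> 0" using z memO by (fastforce simp: f_def r_def fcon_def rcon_def)
        show "z Ph \<ge> 0" using z memO by (fastforce simp: f_def r_def fcon_def rcon_def)
        show "z Ps \<ge> 0" using z memO by (fastforce simp: f_def r_def fcon_def rcon_def)
        show "z (Al b) - z (Be b l) + z (De l) + real m * lsize S l * (z Ph - z Ps) \<le> c b l m"
          if "b \<in> B" "l \<in> Lb b" "m \<in> Mb b l" for b l m
          using z memX[OF that] by (fastforce simp: f_def r_def fcon_def rcon_def)
        show "(\<Sum>b\<in>{b\<in>B. l \<in> Lb b}. z (Be b l)) - z Ga - z (De l) + chi L2 l * z Mu \<le> 0"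
          if "l \<in> L1" for l using z memY[OF that] by (fastforce simp: f_def r_def fcon_def rcon_def)
        show "z Mu \<le> P" using z memO by (fastforce simp: f_def r_def fcon_def rcon_def)
      qed
      then have "dmp_obj B k Ilo Ihi (\<lambda>b. z (Al b)) (z Ga) (z Mu) (z Ph) (z Ps) \<le> D"
        using dopt unfolding drmp_optimal_def D_def by blast
      moreover have "dmp_obj B k Ilo Ihi (\<lambda>b. z (Al b)) (z Ga) (z Mu) (z Ph) (z Ps) \<ge> zR"
        using z memO by (fastforce simp: f_def r_def fcon_def rcon_def dmp_obj_def)
      ultimately show False using lt by linarith
    qed
    obtain mu' where m0: "\<forall>i\<in>I. mu' i \<ge> 0" and iden: "\<forall>z. (\<Sum>i\<in>I. mu' i * f i z) = 0"
      and neg: "(\<Sum>i\<in>I. mu' i * r i) < 0"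
      using farkas[OF fV fI lin infeas] by blast
    define t where "t = mu' CO"
    have t0: "t \<ge> 0" using m0 memO unfolding t_def by auto
    show False
    proof (cases "t = 0")
      case True
      define z0 where "z0 v = (case v of Al b \<Rightarrow> al b | Be b l \<Rightarrow> be b l | Ga \<Rightarrow> ga | De l \<Rightarrow> de l
         | Mu \<Rightarrow> mu | Ph \<Rightarrow> ph | Ps \<Rightarrow> ps)" for v
      have "(\<Sum>i\<in>I. mu' i * f i z0) \<le> (\<Sum>i\<in>I. mu' i * r i)"
      proof (rule sum_mono)
        fix i assume i: "i \<in> I"
        show "mu' i * f i z0 \<le> mu' i * r i"
        proof (cases "i = CO")
          case True then show ?thesis using \<open>t = 0\<close> t_def by simp
        next
          case False
          have "f i z0 \<le> r i" using i[unfolded I_def] False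
          proof (cases rule: II_cases)
            case (X b l m) then show ?thesis using dfeas unfolding drmp_feasible_def
              by (simp add: f_def r_def fcon_def rcon_def z0_def)
          next
            case (Y l) then show ?thesis using dfeas unfolding drmp_feasible_def
              by (simp add: f_def r_def fcon_def rcon_def z0_def)
          qed (use dfeas in \<open>auto simp: drmp_feasible_def f_def r_def fcon_def rcon_def z0_def\<close>)
          then show ?thesis using m0 i by (simp add: mult_left_mono)
        qed
      qed
      then show False using iden neg by simp
    next
      case False
      with t0 have tpos: "t > 0" by simp
      define X where "X b l m = mu' (CX b l m)" for b l m
      define Y where "Y l = mu' (CY l)" for l
      define sb where "sb b l = mu' (SB b l)" for b l
      define sd where "sd l = mu' (SD l)" for l
      have iden2: "(\<Sum>b\<in>B. \<Sum>l\<in>Lb b. \<Sum>m\<in>Mb b l. X b l m * (z (Al b) - z (Be b l) + z (De l) + real m * lsize S l * (z Ph - z Ps)))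
        + (\<Sum>l\<in>L1. Y l * ((\<Sum>b\<in>{b\<in>B. l \<in> Lb b}. z (Be b l)) - z Ga - z (De l) + chi L2 l * z Mu))
        + mu' CP * z Mu + (\<Sum>b\<in>B. \<Sum>l\<in>Lb b. sb b l * (- z (Be b l))) + mu' SG * (- z Ga)
        + (\<Sum>l\<in>L1. sd l * (- z (De l))) + mu' SM * (- z Mu) + mu' SPh * (- z Ph) + mu' SPs * (- z Ps)
        + t * (- ((\<Sum>b\<in>B. z (Al b)) - real k * z Ga + Ilo * z Ph - Ihi * z Ps + z Mu)) = 0" for z
      proof -
        have "(\<Sum>i\<in>I. mu' i * f i z) = 0" using iden by blast
        then show ?thesis unfolding I_def sum_II[OF fin Lb Mbf]
          by (simp add: f_def fcon_def X_def Y_def sb_def sd_def t_def)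
      qed
      have rhs: "(\<Sum>b\<in>B. \<Sum>l\<in>Lb b. \<Sum>m\<in>Mb b l. X b l m * c b l m) + mu' CP * P - t * zR < 0"
      proof -
        have "(\<Sum>i\<in>I. mu' i * r i) < 0" by (rule neg)
        then show ?thesis unfolding I_def sum_II[OF fin Lb Mbf]
          by (simp add: r_def rcon_def X_def t_def)
      qed
      have eGa: "- (\<Sum>l\<in>L1. Y l) - mu' SG + t * real k = 0"
        using iden2[of "\<lambda>v. if v = Ga then 1 else 0"] by (simp add: sum_negf)
      have eMu: "(\<Sum>l\<in>L1. Y l * chi L2 l) + mu' CP - mu' SM - t = 0"
        using iden2[of "\<lambda>v. if v = Mu then 1 else 0"] by (simp add: sum_negf)
      have ePh: "(\<Sum>b\<in>B. \<Sum>l\<in>Lb b. \<Sum>m\<in>Mb b l. X b l m * (real m * lsize S l)) - mu' SPh - t * Ilo = 0"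
        using iden2[of "\<lambda>v. if v = Ph then 1 else 0"] by (simp add: sum_negf)
      have ePs: "- (\<Sum>b\<in>B. \<Sum>l\<in>Lb b. \<Sum>m\<in>Mb b l. X b l m * (real m * lsize S l)) - mu' SPs + t * Ihi = 0"
        using iden2[of "\<lambda>v. if v = Ps then 1 else 0"] by (simp add: sum_negf)
      have eAl: "(\<Sum>l\<in>Lb b0. \<Sum>m\<in>Mb b0 l. X b0 l m) - t = 0" if b0: "b0 \<in> B" for b0
      proof -
        have h: "(\<Sum>b\<in>B. \<Sum>l\<in>Lb b. \<Sum>m\<in>Mb b l. X b l m * (if b = b0 then 1 else 0)) = t"
          using iden2[of "\<lambda>v. if v = Al b0 then 1 else 0"] b0 fin by (simp add: sum_negf)
        have "(\<Sum>b\<in>B. \<Sum>l\<in>Lb b. \<Sum>m\<in>Mb b l. X b l m * (if b = b0 then 1 else 0))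
            = (\<Sum>b\<in>B. if b = b0 then (\<Sum>l\<in>Lb b. \<Sum>m\<in>Mb b l. X b l m) else 0)"
          by (rule sum.cong) auto
        then show ?thesis using h b0 fin by simp
      qed
      have eBe: "- (\<Sum>m\<in>Mb b0 l0. X b0 l0 m) + Y l0 - sb b0 l0 = 0" if b0: "b0 \<in> B" "l0 \<in> Lb b0" for b0 l0
      proof -
        have "(\<Sum>l\<in>L1. if l \<in> Lb b0 then if l = l0 then Y l0 else 0 else 0) = (\<Sum>l\<in>L1. if l = l0 then Y l0 else 0)"
          using b0 by (intro sum.cong) auto
        also have "\<dots> = Y l0" using b0 Lb fin by auto
        finally have e: "(\<Sum>l\<in>L1. if l \<in> Lb b0 then if l = l0 then Y l0 else 0 else 0) = Y l0" .
        show ?thesis using iden2[of "\<lambda>v. if v = Be b0 l0 then 1 else 0"] b0 fin finLb Lb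
          by (simp add: sum_negf mult_if01 if_conj0 sum_if_const sum_if_eq e cong: if_cong)
      qed
      have eDe: "(\<Sum>b\<in>{b\<in>B. l0 \<in> Lb b}. \<Sum>m\<in>Mb b l0. X b l0 m) - Y l0 - sd l0 = 0" if l0: "l0 \<in> L1" for l0
        using iden2[of "\<lambda>v. if v = De l0 then 1 else 0"] l0 fin finLb Lb
        by (simp add: sum_negf mult_if01 if_conj0 sum_if_const sum_if_eq sum.inter_filter cong: if_cong)
      have X0: "\<forall>b\<in>B. \<forall>l\<in>Lb b. \<forall>m\<in>Mb b l. X b l m \<ge> 0" using m0 memX unfolding X_def by blast
      have Y0: "\<forall>l\<in>L1. Y l \<ge> 0" using m0 memY unfolding Y_def by blast
      have p0: "mu' CP \<ge> 0" and sg0: "mu' SG \<ge> 0" and sm0: "mu' SM \<ge> 0" and sph0: "mu' SPh \<ge> 0"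
        and sps0: "mu' SPs \<ge> 0" using m0 memO by auto
      have A: "\<forall>b\<in>B. (\<Sum>l\<in>Lb b. \<Sum>m\<in>Mb b l. X b l m) = t" using eAl by auto
      have Bt: "\<forall>b\<in>B. \<forall>l\<in>Lb b. Y l - (\<Sum>m\<in>Mb b l. X b l m) \<ge> 0"
      proof (intro ballI)
        fix b l assume "b \<in> B" "l \<in> Lb b"
        then show "Y l - (\<Sum>m\<in>Mb b l. X b l m) \<ge> 0"
          using eBe[of b l] m0 memSB[of b l] unfolding sb_def by fastforce
      qed
      have G: "(\<Sum>l\<in>L1. Y l) \<le> t * real k" using eGa sg0 by (simp add: mult.commute)
      have Dt: "\<forall>l\<in>L1. (\<Sum>b\<in>{b\<in>B. l \<in> Lb b}. \<Sum>m\<in>Mb b l. X b l m) - Y l \<ge> 0"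
      proof
        fix l assume "l \<in> L1"
        then show "(\<Sum>b\<in>{b\<in>B. l \<in> Lb b}. \<Sum>m\<in>Mb b l. X b l m) - Y l \<ge> 0"
          using eDe[of l] m0 memSD[of l] unfolding sd_def by fastforce
      qed
      have "(\<Sum>l\<in>L1. Y l * chi L2 l) = (\<Sum>l\<in>L1 - L2. Y l)"
        using sum_chi[OF fin(2), of L2 Y] by (simp add: mult.commute)
      then have Mu: "(\<Sum>l\<in>L1 - L2. Y l) + mu' CP \<ge> t" using eMu sm0 by linarith
      have QQ: "(\<Sum>b\<in>B. \<Sum>l\<in>Lb b. \<Sum>m\<in>Mb b l. X b l m * (real m * lsize S l))
          = (\<Sum>b\<in>B. \<Sum>l\<in>Lb b. \<Sum>m\<in>Mb b l. real m * lsize S l * X b l m)" by (simp add: mult_ac)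
      have Q1: "(\<Sum>b\<in>B. \<Sum>l\<in>Lb b. \<Sum>m\<in>Mb b l. real m * lsize S l * X b l m) \<ge> t * Ilo"
        using ePh sph0 QQ by linarith
      have Q2: "(\<Sum>b\<in>B. \<Sum>l\<in>Lb b. \<Sum>m\<in>Mb b l. real m * lsize S l * X b l m) \<le> t * Ihi"
        using ePs sps0 QQ by linarith
      have feas: "rmp_feasible B S L1 L2 Lb Mb k Ilo Ihi (\<lambda>b l m. X b l m / t) (\<lambda>l. Y l / t) (mu' CP / t)"
        by (rule rmp_scale[OF tpos X0 Y0 p0 A Bt G Dt Mu Q1 Q2])
      then have "zR \<le> rmp_obj B Lb Mb c P (\<lambda>b l m. X b l m / t) (\<lambda>l. Y l / t) (mu' CP / t)"
        using po unfolding rmp_optimal_def zR_def by blast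
      also have "rmp_obj B Lb Mb c P (\<lambda>b l m. X b l m / t) (\<lambda>l. Y l / t) (mu' CP / t)
          = ((\<Sum>b\<in>B. \<Sum>l\<in>Lb b. \<Sum>m\<in>Mb b l. X b l m * c b l m) + mu' CP * P) / t"
        unfolding rmp_obj_def by (simp add: sum_divide_distrib add_divide_distrib mult_ac)
      also have "\<dots> < zR" using rhs tpos by (simp add: pos_divide_less_eq mult.commute)
      finally show False by simp
    qed
  qed
  then show ?thesis using le unfolding zR_def D_def by simp
qed


lemma mp_weak:
  assumes "finite B" "finite Ls"
    and pf: "mp_feasible B S Ms Ls L2 k Ilo Ihi x y p"
    and df: "dmp_feasible B S Ms Ls L2 c P al be ga de mu ph ps"
  shows "dmp_obj B k Ilo Ihi al ga mu ph ps \<le> mp_obj B Ms Ls c P x y p"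
proof -
  have e: "l \<in> Ls \<Longrightarrow> {b\<in>B. l \<in> Ls} = B" for l by auto
  have "rmp_feasible B S Ls L2 (\<lambda>_. Ls) (\<lambda>_ _. Ms) k Ilo Ihi x y p"
    using pf unfolding mp_feasible_def rmp_feasible_def by (simp add: e)
  moreover have "drmp_feasible B S Ls L2 (\<lambda>_. Ls) (\<lambda>_ _. Ms) c P al be ga de mu ph ps"
    using df unfolding dmp_feasible_def drmp_feasible_def by (simp add: e)
  ultimately have "dmp_obj B k Ilo Ihi al ga mu ph ps \<le> rmp_obj B (\<lambda>_. Ls) (\<lambda>_ _. Ms) c P x y p"
    using assms(1,2) by (intro weak_duality) auto
  then show ?thesis by (simp add: rmp_obj_def mp_obj_def)
qed

lemma ext_sum:
  assumes "finite Ls" "finite Ms" "A \<subseteq> Ls" "\<forall>l\<in>A. M l \<subseteq> Ms"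
  shows "(\<Sum>l\<in>Ls. \<Sum>m\<in>Ms. if l \<in> A \<and> m \<in> M l then f l m else 0) = (\<Sum>l\<in>A. \<Sum>m\<in>M l. f l m)"
proof -
  have "(\<Sum>l\<in>Ls. \<Sum>m\<in>Ms. if l \<in> A \<and> m \<in> M l then f l m else 0)
      = (\<Sum>l\<in>Ls. if l \<in> A then (\<Sum>m\<in>M l. f l m) else 0)"
  proof (rule sum.cong[OF refl])
    fix l assume "l \<in> Ls"
    show "(\<Sum>m\<in>Ms. if l \<in> A \<and> m \<in> M l then f l m else 0) = (if l \<in> A then (\<Sum>m\<in>M l. f l m) else 0)"
    proof (cases "l \<in> A")
      case True
      have "(\<Sum>m\<in>Ms. if m \<in> M l then f l m else 0) = (\<Sum>m\<in>{m\<in>Ms. m \<in> M l}. f l m)"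
        using assms(2) by (simp add: sum.inter_filter)
      also have "{m\<in>Ms. m \<in> M l} = M l" using True assms(4) by auto
      finally show ?thesis using True by simp
    qed simp
  qed
  also have "\<dots> = (\<Sum>l\<in>{l\<in>Ls. l \<in> A}. \<Sum>m\<in>M l. f l m)"
    using assms(1) by (simp add: sum.inter_filter)
  also have "{l\<in>Ls. l \<in> A} = A" using assms(3) by auto
  finally show ?thesis .
qed

lemma rmp_to_mp:
  assumes fin: "finite B" "finite Ms" "finite Ls" and L12: "L1 \<subseteq> Ls"
    and Lb: "\<forall>b\<in>B. Lb b \<subseteq> L1" and Mb: "\<forall>b\<in>B. \<forall>l\<in>Lb b. Mb b l \<subseteq> Ms \<and> Mb b l \<noteq> {}"
    and pf: "rmp_feasible B S L1 L2 Lb Mb k Ilo Ihi x y p"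
  defines "x' \<equiv> \<lambda>b l m. if l \<in> Lb b \<and> m \<in> Mb b l then x b l m else 0"
    and "y' \<equiv> \<lambda>l. if l \<in> L1 then y l else 0"
  shows "mp_feasible B S Ms Ls L2 k Ilo Ihi x' y' p \<and> mp_obj B Ms Ls c P x' y' p = rmp_obj B Lb Mb c P x y p"
proof -
  have LbLs: "Lb b \<subseteq> Ls" if "b \<in> B" for b using Lb L12 that by auto
  have Mb': "\<forall>l\<in>Lb b. Mb b l \<subseteq> Ms" if "b \<in> B" for b using Mb that by auto
  have ES: "(\<Sum>l\<in>Ls. \<Sum>m\<in>Ms. g l m * x' b l m) = (\<Sum>l\<in>Lb b. \<Sum>m\<in>Mb b l. g l m * x b l m)"
    if "b \<in> B" for b g
  proof -
    have "(\<Sum>l\<in>Ls. \<Sum>m\<in>Ms. g l m * x' b l m)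
       = (\<Sum>l\<in>Ls. \<Sum>m\<in>Ms. if l \<in> Lb b \<and> m \<in> Mb b l then g l m * x b l m else 0)"
      unfolding x'_def by (intro sum.cong refl) auto
    also have "\<dots> = (\<Sum>l\<in>Lb b. \<Sum>m\<in>Mb b l. g l m * x b l m)"
      by (rule ext_sum[OF fin(3,2) LbLs[OF that] Mb'[OF that]])
    finally show ?thesis .
  qed
  have ES1: "(\<Sum>l\<in>Ls. \<Sum>m\<in>Ms. x' b l m) = (\<Sum>l\<in>Lb b. \<Sum>m\<in>Mb b l. x b l m)" if "b \<in> B" for b
    using ES[OF that, of "\<lambda>_ _. 1"] by simp
  have XS: "(\<Sum>m\<in>Ms. x' b l m) = (if l \<in> Lb b then (\<Sum>m\<in>Mb b l. x b l m) else 0)"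
    if "b \<in> B" for b l
  proof (cases "l \<in> Lb b")
    case True
    have "(\<Sum>m\<in>Ms. x' b l m) = (\<Sum>m\<in>{m\<in>Ms. m \<in> Mb b l}. x b l m)"
      unfolding x'_def using True fin(2) by (simp add: sum.inter_filter)
    also have "{m\<in>Ms. m \<in> Mb b l} = Mb b l" using True Mb that by auto
    finally show ?thesis using True by simp
  qed (simp add: x'_def)
  from pf have x0: "\<forall>b\<in>B. \<forall>l\<in>Lb b. \<forall>m\<in>Mb b l. x b l m \<ge> 0" and y0: "\<forall>l\<in>L1. y l \<ge> 0" and p0: "p \<ge> 0"
    and a1: "\<forall>b\<in>B. (\<Sum>l\<in>Lb b. \<Sum>m\<in>Mb b l. x b l m) = 1"
    and bt: "\<forall>b\<in>B. \<forall>l\<in>Lb b. y l - (\<Sum>m\<in>Mb b l. x b l m) \<ge> 0"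
    and gk: "- (\<Sum>l\<in>L1. y l) \<ge> - real k"
    and dt: "\<forall>l\<in>L1. (\<Sum>b\<in>{b\<in>B. l \<in> Lb b}. \<Sum>m\<in>Mb b l. x b l m) - y l \<ge> 0"
    and mu1: "(\<Sum>l\<in>L1 - L2. y l) + p \<ge> 1"
    and qlo: "(\<Sum>b\<in>B. \<Sum>l\<in>Lb b. \<Sum>m\<in>Mb b l. real m * lsize S l * x b l m) \<ge> Ilo"
    and qhi: "- (\<Sum>b\<in>B. \<Sum>l\<in>Lb b. \<Sum>m\<in>Mb b l. real m * lsize S l * x b l m) \<ge> - Ihi"
    unfolding rmp_feasible_def by auto
  have Ysum: "(\<Sum>l\<in>Ls. y' l) = (\<Sum>l\<in>L1. y l)"
  proof -
    have "(\<Sum>l\<in>Ls. y' l) = (\<Sum>l\<in>{l\<in>Ls. l \<in> L1}. y l)" unfolding y'_def using fin(3) by (simp add: sum.inter_filter)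
    also have "{l\<in>Ls. l \<in> L1} = L1" using L12 by auto
    finally show ?thesis .
  qed
  have Ysum2: "(\<Sum>l\<in>Ls - L2. y' l) = (\<Sum>l\<in>L1 - L2. y l)"
  proof -
    have "(\<Sum>l\<in>Ls - L2. y' l) = (\<Sum>l\<in>{l\<in>Ls - L2. l \<in> L1}. y l)" unfolding y'_def using fin(3) by (subst sum.inter_filter) auto
    also have "{l\<in>Ls - L2. l \<in> L1} = L1 - L2" using L12 by auto
    finally show ?thesis .
  qed
  have Q: "(\<Sum>b\<in>B. \<Sum>l\<in>Ls. \<Sum>m\<in>Ms. real m * lsize S l * x' b l m) = (\<Sum>b\<in>B. \<Sum>l\<in>Lb b. \<Sum>m\<in>Mb b l. real m * lsize S l * x b l m)"
    by (rule sum.cong[OF refl]) (rule ES[of _ "\<lambda>l m. real m * lsize S l"])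
  have dt': "(\<Sum>b\<in>B. \<Sum>m\<in>Ms. x' b l m) - y' l \<ge> 0" if "l \<in> Ls" for l
  proof (cases "l \<in> L1")
    case True
    have "(\<Sum>b\<in>B. \<Sum>m\<in>Ms. x' b l m) = (\<Sum>b\<in>B. if l \<in> Lb b then (\<Sum>m\<in>Mb b l. x b l m) else 0)"
      using XS by (intro sum.cong) auto
    also have "\<dots> = (\<Sum>b\<in>{b\<in>B. l \<in> Lb b}. \<Sum>m\<in>Mb b l. x b l m)" using fin(1) by (simp add: sum.inter_filter)
    finally show ?thesis using dt True y'_def by simp
  next
    case False
    then have "l \<notin> Lb b" if "b \<in> B" for b using Lb that by auto
    then have "(\<Sum>b\<in>B. \<Sum>m\<in>Ms. x' b l m) = 0" using XS by (intro sum.neutral) auto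
    then show ?thesis using False y'_def by simp
  qed
  have bt': "y' l - (\<Sum>m\<in>Ms. x' b l m) \<ge> 0" if "b \<in> B" "l \<in> Ls" for b l
    using XS[OF that(1), of l] bt y0 that Lb unfolding y'_def by (cases "l \<in> Lb b") auto
  have "mp_feasible B S Ms Ls L2 k Ilo Ihi x' y' p"
    unfolding mp_feasible_def
    using x0 y0 p0 a1 ES1 bt' gk Ysum dt' mu1 Ysum2 Q qlo qhi
    by (auto simp: x'_def y'_def)
  moreover have "mp_obj B Ms Ls c P x' y' p = rmp_obj B Lb Mb c P x y p"
    unfolding mp_obj_def rmp_obj_def
  proof -
    have "(\<Sum>b\<in>B. \<Sum>l\<in>Ls. \<Sum>m\<in>Ms. c b l m * x' b l m) = (\<Sum>b\<in>B. \<Sum>l\<in>Lb b. \<Sum>m\<in>Mb b l. c b l m * x b l m)"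
      by (rule sum.cong[OF refl]) (rule ES[of _ "\<lambda>l m. c _ l m"])
    then show "(\<Sum>b\<in>B. \<Sum>l\<in>Ls. \<Sum>m\<in>Ms. c b l m * x' b l m) + P * p =
      (\<Sum>b\<in>B. \<Sum>l\<in>Lb b. \<Sum>m\<in>Mb b l. c b l m * x b l m) + P * p" by simp
  qed
  ultimately show ?thesis by simp
qed


lemma fin_set2: "finite A \<Longrightarrow> finite M \<Longrightarrow> finite {f a m |a m. a \<in> A \<and> m \<in> M}"
proof -
  assume "finite A" "finite M"
  have "{f a m |a m. a \<in> A \<and> m \<in> M} = (\<lambda>(a,m). f a m) ` (A \<times> M)" by auto
  then show ?thesis using \<open>finite A\<close> \<open>finite M\<close> by simp
qed

lemma lift_feasible:
  assumes B: "finite B" "B \<noteq> {}" and Ms: "finite Ms" "Ms \<noteq> {}" and Ls: "finite Ls"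
    and L12: "L1 \<subseteq> Ls" and Lb: "\<forall>b\<in>B. Lb b \<subseteq> L1"
    and df: "drmp_feasible B S L1 L2 Lb Mb c P al be ga de mu ph ps"
  defines "cs \<equiv> cstar S Ms L1 Lb c al be de ph ps"
    and "ds \<equiv> dstar B S Ms Ls L1 L2 Lb c al be ga de mu ph ps"
  shows "dmp_feasible B S Ms Ls L2 c P
           (\<lambda>b. al b + cs b) (beta_check S Ms L1 Lb c al be de ph ps) (ga - ds)
           (delta_check B S Ms L1 Lb c al be de ph ps) mu ph ps"
proof -
  define cb where "cb = cbar S L1 Lb c al be de ph ps"
  define bc where "bc = beta_check S Ms L1 Lb c al be de ph ps"
  define dc where "dc = delta_check B S Ms L1 Lb c al be de ph ps"
  define r where "r l = - (\<Sum>b\<in>B. bc b l) + dc l + ga - chi L2 l * mu" for l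
  define D where "D = Ls - (\<Inter>b\<in>B. Lb b)"
  from df have be0: "\<forall>b\<in>B. \<forall>l\<in>Lb b. be b l \<ge> 0" and ga0: "ga \<ge> 0" and de0: "\<forall>l\<in>L1. de l \<ge> 0"
    and mu0: "mu \<ge> 0" and ph0: "ph \<ge> 0" and ps0: "ps \<ge> 0"
    and yc: "\<forall>l\<in>L1. (\<Sum>b\<in>{b\<in>B. l \<in> Lb b}. be b l) - ga - de l + chi L2 l * mu \<le> 0"
    and muP: "mu \<le> P"
    unfolding drmp_feasible_def by auto
  have finLb: "finite (Lb b)" if "b \<in> B" for b
  proof -
    have "Lb b \<subseteq> Ls" using Lb L12 that by auto
    then show ?thesis using Ls by (rule finite_subset)
  qed
  have cs0: "cs b \<le> 0" for b unfolding cs_def cstar_def neg_part_def by auto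
  have csle: "cs b \<le> cb b l m" if "b \<in> B" "l \<in> Lb b" "m \<in> Ms" for b l m
  proof -
    have fin: "finite {cb b l m |l m. l \<in> Lb b \<and> m \<in> Ms}" by (rule fin_set2[OF finLb[OF that(1)] Ms(1)])
    have "Min {cb b l m |l m. l \<in> Lb b \<and> m \<in> Ms} \<le> cb b l m" using that by (intro Min_le[OF fin]) blast
    then show ?thesis using that unfolding cs_def cstar_def neg_part_def cb_def by auto
  qed
  have ds0: "ds \<le> 0" unfolding ds_def dstar_def neg_part_def by (auto simp: Let_def)
  have dsle: "ds \<le> r l" if "l \<in> D" for l
  proof -
    have "finite D" using Ls D_def by auto
    then have "Min (r ` D) \<le> r l" using that by auto
    then show ?thesis using that unfolding ds_def dstar_def neg_part_def r_def D_def bc_def dc_def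
      by (auto simp: Let_def)
  qed
  have bc0: "bc b l \<ge> 0" if "b \<in> B" "l \<in> Ls" for b l
    using be0 that unfolding bc_def beta_check_def neg_part_def by auto
  have dc0: "dc l \<ge> 0" if "l \<in> Ls" for l
    using de0 that unfolding dc_def delta_check_def pos_part_def by auto
  have xcon: "al b + cs b - bc b l + dc l + real m * lsize S l * (ph - ps) \<le> c b l m"
    if b: "b \<in> B" and l: "l \<in> Ls" and m: "m \<in> Ms" for b l m
  proof -
    have ceq: "c b l m = cb b l m + al b - beta_bar Lb be b l + delta_bar L1 de l + real m * lsize S l * (ph - ps)"
      unfolding cb_def cbar_def by simp
    define Mn where "Mn = Min ((\<lambda>m. cb b l m) ` Ms)"
    have Mnle: "Mn \<le> cb b l m" unfolding Mn_def using Ms m by auto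
    have key: "cs b - bc b l + dc l \<le> cb b l m - beta_bar Lb be b l + delta_bar L1 de l"
    proof (cases "l \<in> Lb b")
      case True
      then have "l \<in> L1" using Lb b by auto
      then show ?thesis using True csle[OF b True m]
        unfolding bc_def dc_def beta_check_def delta_check_def beta_bar_def delta_bar_def by simp
    next
      case nLb: False
      have bcv: "bc b l = neg_part Mn" unfolding bc_def beta_check_def Mn_def cb_def using nLb by simp
      show ?thesis
      proof (cases "l \<in> L1")
        case True
        then show ?thesis using nLb bcv Mnle cs0[of b]
          unfolding dc_def delta_check_def beta_bar_def delta_bar_def neg_part_def by auto
      next
        case False
        define Ma where "Ma = Min {cb b l m | b m. b \<in> B \<and> m \<in> Ms}"
        have "finite {cb b l m | b m. b \<in> B \<and> m \<in> Ms}" by (rule fin_set2[OF B(1) Ms(1)])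
        then have "Ma \<le> cb b l m'" if "m' \<in> Ms" for m'
        proof -
          have "cb b l m' \<in> {cb b l m | b m. b \<in> B \<and> m \<in> Ms}" using b that by blast
          then show ?thesis unfolding Ma_def using Min_le \<open>finite {cb b l m | b m. b \<in> B \<and> m \<in> Ms}\<close> by blast
        qed
        then have MaMn: "Ma \<le> Mn" unfolding Mn_def using Ms by auto
        have dcv: "dc l = pos_part Ma" unfolding dc_def delta_check_def Ma_def cb_def using False by simp
        show ?thesis using nLb False bcv dcv MaMn Mnle cs0[of b]
          unfolding beta_bar_def delta_bar_def neg_part_def pos_part_def by auto
      qed
    qed
    show ?thesis using ceq key by linarith
  qed
  have ycon: "(\<Sum>b\<in>B. bc b l) - (ga - ds) - dc l + chi L2 l * mu \<le> 0" if l: "l \<in> Ls" for l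
  proof (cases "l \<in> D")
    case True
    then show ?thesis using dsle[OF True] unfolding r_def by linarith
  next
    case False
    then have inall: "\<forall>b\<in>B. l \<in> Lb b" using l D_def by auto
    then have "l \<in> L1" using Lb B(2) by blast
    have "(\<Sum>b\<in>B. bc b l) = (\<Sum>b\<in>{b\<in>B. l \<in> Lb b}. be b l)"
    proof -
      have "{b\<in>B. l \<in> Lb b} = B" using inall by auto
      then show ?thesis using inall unfolding bc_def beta_check_def by simp
    qed
    moreover have "dc l = de l" using \<open>l \<in> L1\<close> unfolding dc_def delta_check_def by simp
    ultimately show ?thesis using yc \<open>l \<in> L1\<close> ds0 by fastforce
  qed
  have "ga - ds \<ge> 0" using ga0 ds0 by linarith
  then show ?thesis
    unfolding dmp_feasible_def bc_def[symmetric] dc_def[symmetric]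
    using bc0 dc0 mu0 ph0 ps0 muP xcon ycon by auto
qed


theorem theorem2:
  fixes B :: "'b set" and S :: "'s set" and Ms :: "nat set"
    and Ls L1 L2 :: "('s \<Rightarrow> nat) set"
    and Lb :: "'b \<Rightarrow> ('s \<Rightarrow> nat) set" and Mb :: "'b \<Rightarrow> ('s \<Rightarrow> nat) \<Rightarrow> nat set"
    and c :: "'b \<Rightarrow> ('s \<Rightarrow> nat) \<Rightarrow> nat \<Rightarrow> real"
    and k :: nat and Ilo Ihi P :: real
    and x :: "'b \<Rightarrow> ('s \<Rightarrow> nat) \<Rightarrow> nat \<Rightarrow> real" and y :: "('s \<Rightarrow> nat) \<Rightarrow> real" and p :: real
    and al :: "'b \<Rightarrow> real" and be :: "'b \<Rightarrow> ('s \<Rightarrow> nat) \<Rightarrow> real" and ga :: real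
    and de :: "('s \<Rightarrow> nat) \<Rightarrow> real" and mu ph ps :: real
  assumes B: "finite B" "B \<noteq> {}"
    and S: "finite S" "S \<noteq> {}"
    and Ms: "finite Ms" "Ms \<noteq> {}"
    and Ls: "finite Ls" "Ls \<noteq> {}" "\<forall>l\<in>Ls. \<forall>s. s \<notin> S \<longrightarrow> l s = 0"
    and c_nonneg: "\<forall>b\<in>B. \<forall>l\<in>Ls. \<forall>m\<in>Ms. c b l m \<ge> 0"
    and I: "Ilo \<le> Ihi" and P: "P > 0"
    and L12: "L2 \<subseteq> L1" "L1 \<subseteq> Ls"
    and Lb: "\<forall>b\<in>B. Lb b \<subseteq> L1"
    and Mb: "\<forall>b\<in>B. \<forall>l\<in>Lb b. Mb b l \<subseteq> Ms \<and> Mb b l \<noteq> {}"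
    and primal_opt: "rmp_optimal B S L1 L2 Lb Mb c k Ilo Ihi P x y p"
    and dual_opt: "drmp_optimal B S L1 L2 Lb Mb c k Ilo Ihi P al be ga de mu ph ps"
  defines "cs \<equiv> cstar S Ms L1 Lb c al be de ph ps"
    and "ds \<equiv> dstar B S Ms Ls L1 L2 Lb c al be ga de mu ph ps"
    and "zRMP \<equiv> rmp_obj B Lb Mb c P x y p"
  shows "dmp_feasible B S Ms Ls L2 c P
           (\<lambda>b. al b + cs b) (beta_check S Ms L1 Lb c al be de ph ps) (ga - ds)
           (delta_check B S Ms L1 Lb c al be de ph ps) mu ph ps
       \<and> dmp_obj B k Ilo Ihi (\<lambda>b. al b + cs b) (ga - ds) mu ph ps
           = zRMP + (\<Sum>b\<in>B. cs b) + real k * ds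
       \<and> mp_value B S Ms Ls L2 c k Ilo Ihi P \<ge> zRMP + (\<Sum>b\<in>B. cs b) + real k * ds"
  proof -
  have finL1: "finite L1" using L12(2) Ls(1) finite_subset by metis
  have Mbf: "\<forall>b\<in>B. \<forall>l\<in>Lb b. finite (Mb b l)" using Mb Ms(1) finite_subset by metis
  have pfeas: "rmp_feasible B S L1 L2 Lb Mb k Ilo Ihi x y p" using primal_opt unfolding rmp_optimal_def by auto
  have dfeas: "drmp_feasible B S L1 L2 Lb Mb c P al be ga de mu ph ps" using dual_opt unfolding drmp_optimal_def by auto
  have feas: "dmp_feasible B S Ms Ls L2 c P
           (\<lambda>b. al b + cs b) (beta_check S Ms L1 Lb c al be de ph ps) (ga - ds)
           (delta_check B S Ms L1 Lb c al be de ph ps) mu ph ps"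
    unfolding cs_def ds_def by (rule lift_feasible[OF B Ms Ls(1) L12(2) Lb dfeas])
  have sd: "zRMP = dmp_obj B k Ilo Ihi al ga mu ph ps"
    unfolding zRMP_def by (rule strong_duality[OF B(1) finL1 Lb Mbf primal_opt dual_opt])
  have obj: "dmp_obj B k Ilo Ihi (\<lambda>b. al b + cs b) (ga - ds) mu ph ps
           = zRMP + (\<Sum>b\<in>B. cs b) + real k * ds"
    unfolding sd dmp_obj_def by (simp add: sum.distrib algebra_simps)
  have val: "mp_value B S Ms Ls L2 c k Ilo Ihi P \<ge> dmp_obj B k Ilo Ihi (\<lambda>b. al b + cs b) (ga - ds) mu ph ps"
    unfolding mp_value_def
  proof (rule cInf_greatest)
    obtain x' y' where "mp_feasible B S Ms Ls L2 k Ilo Ihi x' y' p"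
      using rmp_to_mp[OF B(1) Ms(1) Ls(1) L12(2) Lb Mb pfeas] by blast
    then show "{mp_obj B Ms Ls c P x y p |x y p. mp_feasible B S Ms Ls L2 k Ilo Ihi x y p} \<noteq> {}" by blast
  next
    fix v assume "v \<in> {mp_obj B Ms Ls c P x y p |x y p. mp_feasible B S Ms Ls L2 k Ilo Ihi x y p}"
    then obtain x' y' p' where v: "v = mp_obj B Ms Ls c P x' y' p'" "mp_feasible B S Ms Ls L2 k Ilo Ihi x' y' p'"
      by blast
    show "dmp_obj B k Ilo Ihi (\<lambda>b. al b + cs b) (ga - ds) mu ph ps \<le> v"
      unfolding v(1) by (rule mp_weak[OF B(1) Ls(1) v(2) feas])
  qed
  show ?thesis using feas obj val by simp
qed

end
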